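(* Let $G$ be a connected simplicial group and $f\colon G\to G$ a pointed simplicial map such that $f_*\colon\pi_*G\to\pi_*G$ is idempotent. Let $g\colon G\to G$ be the pointwise product $g(x)=x\cdot f(x)^{-1}$. Then, as a simplicial set, $G$ is weakly equivalent to $A\times B$, where $A=\mathrm{colim}(G\xrightarrow{f}G\xrightarrow{f}\cdots)$ and $B=\mathrm{colim}(G\xrightarrow{g}G\xrightarrow{g}\cdots)$; the weak equivalence is the composite $G\xrightarrow{\Delta}G\times G\to A\times B$ of the diagonal with the maps into the colimits.
   Context: Colimits are sequential colimits (mapping telescopes) in pointed simplicial sets. *)

theory Defs
  imports "HOL-Algebra.Group"
begin

text \<open>A simplicial set over element type 'a: sets of n-simplices, and for each
monotone map theta : [m] -> [n] the induced map act m n theta : X_n -> X_m.\<close>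

record 'a sset =
  cells :: "nat \<Rightarrow> 'a set"
  act :: "nat \<Rightarrow> nat \<Rightarrow> (nat \<Rightarrow> nat) \<Rightarrow> 'a \<Rightarrow> 'a"

definition delta_mor :: "nat \<Rightarrow> nat \<Rightarrow> (nat \<Rightarrow> nat) \<Rightarrow> bool" where
  "delta_mor m n \<theta> \<longleftrightarrow> (\<forall>i\<le>m. \<theta> i \<le> n) \<and> (\<forall>i j. i \<le> j \<and> j \<le> m \<longrightarrow> \<theta> i \<le> \<theta> j)"

definition sset :: "'a sset \<Rightarrow> bool" where
  "sset X \<longleftrightarrow>
     (\<forall>m n \<theta> x. delta_mor m n \<theta> \<and> x \<in> cells X n \<longrightarrow> act X m n \<theta> x \<in> cells X m) \<and>
     (\<forall>n x. x \<in> cells X n \<longrightarrow> act X n n id x = x) \<and>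
     (\<forall>l m n \<theta> \<phi> x. delta_mor l m \<theta> \<and> delta_mor m n \<phi> \<and> x \<in> cells X n \<longrightarrow>
          act X l m \<theta> (act X m n \<phi> x) = act X l n (\<phi> \<circ> \<theta>) x) \<and>
     (\<forall>m n \<theta> \<theta>' x. delta_mor m n \<theta> \<and> (\<forall>i\<le>m. \<theta> i = \<theta>' i) \<and> x \<in> cells X n \<longrightarrow>
          act X m n \<theta> x = act X m n \<theta>' x)"

definition smap :: "'a sset \<Rightarrow> 'b sset \<Rightarrow> (nat \<Rightarrow> 'a \<Rightarrow> 'b) \<Rightarrow> bool" where
  "smap X Y F \<longleftrightarrow>
     (\<forall>n x. x \<in> cells X n \<longrightarrow> F n x \<in> cells Y n) \<and>
     (\<forall>m n \<theta> x. delta_mor m n \<theta> \<and> x \<in> cells X n \<longrightarrow>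
          F m (act X m n \<theta> x) = act Y m n \<theta> (F n x))"

definition face :: "'a sset \<Rightarrow> nat \<Rightarrow> nat \<Rightarrow> 'a \<Rightarrow> 'a" where
  "face X n i x = act X n (Suc n) (\<lambda>j. if j < i then j else Suc j) x"

definition pt :: "'a sset \<Rightarrow> nat \<Rightarrow> 'a \<Rightarrow> 'a" where
  "pt X n v = act X n 0 (\<lambda>_. 0) v"

definition kan :: "'a sset \<Rightarrow> bool" where
  "kan X \<longleftrightarrow>
     (\<forall>n k y. k \<le> Suc n \<and> (\<forall>i\<le>Suc n. i \<noteq> k \<longrightarrow> y i \<in> cells X n) \<and>
        (\<forall>p i j. n = Suc p \<and> i < j \<and> j \<le> Suc n \<and> i \<noteq> k \<and> j \<noteq> k \<longrightarrow>
             face X p i (y j) = face X p (j - 1) (y i))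
      \<longrightarrow> (\<exists>x\<in>cells X (Suc n). \<forall>i\<le>Suc n. i \<noteq> k \<longrightarrow> face X n i x = y i))"

text \<open>Spherical k-simplices at vertex v (representatives of pi_k(X,v)).\<close>
definition sph :: "'a sset \<Rightarrow> 'a \<Rightarrow> nat \<Rightarrow> 'a \<Rightarrow> bool" where
  "sph X v k x \<longleftrightarrow> x \<in> cells X k \<and>
     (\<forall>j i. k = Suc j \<and> i \<le> k \<longrightarrow> face X j i x = pt X j v)"

text \<open>Combinatorial homotopy relation on spherical k-simplices at v
(for k = 0 this is the relation defining pi_0).\<close>
definition htp :: "'a sset \<Rightarrow> 'a \<Rightarrow> nat \<Rightarrow> 'a \<Rightarrow> 'a \<Rightarrow> bool" where
  "htp X v k x y \<longleftrightarrow> (\<exists>z\<in>cells X (Suc k).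
     (\<forall>i<k. face X k i z = pt X k v) \<and> face X k k z = x \<and> face X k (Suc k) z = y)"

text \<open>Weak equivalence between Kan complexes: bijection on pi_0 and on all
combinatorial homotopy groups pi_k, k >= 1, at every base vertex.\<close>
definition weq :: "'a sset \<Rightarrow> 'b sset \<Rightarrow> (nat \<Rightarrow> 'a \<Rightarrow> 'b) \<Rightarrow> bool" where
  "weq X Y F \<longleftrightarrow> sset X \<and> sset Y \<and> kan X \<and> kan Y \<and> smap X Y F \<and>
     (\<forall>y\<in>cells Y 0. \<exists>x\<in>cells X 0. htp Y y 0 (F 0 x) y) \<and>
     (\<forall>x\<in>cells X 0. \<forall>x'\<in>cells X 0. htp Y (F 0 x) 0 (F 0 x) (F 0 x') \<longrightarrow> htp X x 0 x x') \<and>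
     (\<forall>v\<in>cells X 0. \<forall>k>0.
        (\<forall>y. sph Y (F 0 v) k y \<longrightarrow> (\<exists>x. sph X v k x \<and> htp Y (F 0 v) k (F k x) y)) \<and>
        (\<forall>x x'. sph X v k x \<and> sph X v k x' \<and> htp Y (F 0 v) k (F k x) (F k x')
                 \<longrightarrow> htp X v k x x'))"

definition grp :: "'a sset \<Rightarrow> (nat \<Rightarrow> 'a \<Rightarrow> 'a \<Rightarrow> 'a) \<Rightarrow> (nat \<Rightarrow> 'a) \<Rightarrow> nat \<Rightarrow> 'a monoid" where
  "grp X mul e n = \<lparr>carrier = cells X n, mult = mul n, one = e n\<rparr>"

definition sgroup :: "'a sset \<Rightarrow> (nat \<Rightarrow> 'a \<Rightarrow> 'a \<Rightarrow> 'a) \<Rightarrow> (nat \<Rightarrow> 'a) \<Rightarrow> bool" where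
  "sgroup X mul e \<longleftrightarrow> sset X \<and> (\<forall>n. group (grp X mul e n)) \<and>
     (\<forall>m n \<theta> x y. delta_mor m n \<theta> \<and> x \<in> cells X n \<and> y \<in> cells X n \<longrightarrow>
        act X m n \<theta> (mul n x y) = mul m (act X m n \<theta> x) (act X m n \<theta> y))"

definition tel_rel :: "'a sset \<Rightarrow> (nat \<Rightarrow> 'a \<Rightarrow> 'a) \<Rightarrow> nat \<Rightarrow> ((nat \<times> 'a) \<times> (nat \<times> 'a)) set" where
  "tel_rel X F n = {((i, x), (j, y)). x \<in> cells X n \<and> y \<in> cells X n \<and>
      (\<exists>m. i \<le> m \<and> j \<le> m \<and> (F n ^^ (m - i)) x = (F n ^^ (m - j)) y)}"

definition colim :: "'a sset \<Rightarrow> (nat \<Rightarrow> 'a \<Rightarrow> 'a) \<Rightarrow> (nat \<times> 'a) set sset" where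
  "colim X F = \<lparr>cells = (\<lambda>n. (UNIV \<times> cells X n) // tel_rel X F n),
     act = (\<lambda>m n \<theta> c. \<Union>((\<lambda>(i, x). tel_rel X F m `` {(i, act X m n \<theta> x)}) ` c))\<rparr>"

definition colim_in :: "'a sset \<Rightarrow> (nat \<Rightarrow> 'a \<Rightarrow> 'a) \<Rightarrow> nat \<Rightarrow> 'a \<Rightarrow> (nat \<times> 'a) set" where
  "colim_in X F n x = tel_rel X F n `` {(0, x)}"

definition sprod :: "'a sset \<Rightarrow> 'b sset \<Rightarrow> ('a \<times> 'b) sset" where
  "sprod X Y = \<lparr>cells = (\<lambda>n. cells X n \<times> cells Y n),
     act = (\<lambda>m n \<theta> (a, b). (act X m n \<theta> a, act Y m n \<theta> b))\<rparr>"

end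

theory Submission
  imports Defs
begin

lemma sset_closed: "sset X \<Longrightarrow> delta_mor m n \<theta> \<Longrightarrow> x \<in> cells X n \<Longrightarrow> act X m n \<theta> x \<in> cells X m"
  unfolding sset_def by blast
lemma sset_id: "sset X \<Longrightarrow> x \<in> cells X n \<Longrightarrow> act X n n id x = x"
  unfolding sset_def by blast
lemma sset_comp0: "sset X \<Longrightarrow> delta_mor l m \<theta> \<Longrightarrow> delta_mor m n \<phi> \<Longrightarrow> x \<in> cells X n \<Longrightarrow>
   act X l m \<theta> (act X m n \<phi> x) = act X l n (\<phi> \<circ> \<theta>) x"
  unfolding sset_def by blast
lemma sset_ext: "sset X \<Longrightarrow> delta_mor m n \<theta> \<Longrightarrow> (\<forall>i\<le>m. \<theta> i = \<theta>' i) \<Longrightarrow> x \<in> cells X n \<Longrightarrow>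
   act X m n \<theta> x = act X m n \<theta>' x"
  unfolding sset_def by blast

lemma delta_comp: "delta_mor l m \<theta> \<Longrightarrow> delta_mor m n \<phi> \<Longrightarrow> delta_mor l n (\<phi> \<circ> \<theta>)"
  unfolding delta_mor_def by auto

lemma sset_comp: "sset X \<Longrightarrow> delta_mor l m \<theta> \<Longrightarrow> delta_mor m n \<phi> \<Longrightarrow> x \<in> cells X n \<Longrightarrow>
   (\<forall>i\<le>l. \<psi> i = \<phi> (\<theta> i)) \<Longrightarrow> act X l m \<theta> (act X m n \<phi> x) = act X l n \<psi> x"
  apply (subst sset_comp0, assumption+)
  apply (rule sset_ext, assumption)
  by (auto intro: delta_comp)

lemma sset_id': "sset X \<Longrightarrow> x \<in> cells X n \<Longrightarrow> (\<forall>i\<le>n. \<theta> i = i) \<Longrightarrow> act X n n \<theta> x = x"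
  by (metis (mono_tags, lifting) delta_mor_def id_apply sset_ext sset_id)

definition dface :: "nat \<Rightarrow> nat \<Rightarrow> nat" where "dface i = (\<lambda>j. if j < i then j else Suc j)"
definition ddeg :: "nat \<Rightarrow> nat \<Rightarrow> nat" where "ddeg i = (\<lambda>j. if j \<le> i then j else j - 1)"
definition degen :: "'a sset \<Rightarrow> nat \<Rightarrow> nat \<Rightarrow> 'a \<Rightarrow> 'a" where
  "degen X n i x = act X (Suc n) n (ddeg i) x"

lemma face_alt: "face X n i x = act X n (Suc n) (dface i) x"
  by (simp add: face_def dface_def)

lemma delta_dface: "delta_mor n (Suc n) (dface i)"
  unfolding delta_mor_def dface_def by auto
lemma delta_ddeg: "i \<le> n \<Longrightarrow> delta_mor (Suc n) n (ddeg i)"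
  unfolding delta_mor_def ddeg_def by auto
lemma delta_const: "c \<le> n \<Longrightarrow> delta_mor m n (\<lambda>_. c)"
  unfolding delta_mor_def by auto

lemma face_closed: "sset X \<Longrightarrow> x \<in> cells X (Suc n) \<Longrightarrow> face X n i x \<in> cells X n"
  by (simp add: face_alt delta_dface sset_closed)
lemma degen_closed: "sset X \<Longrightarrow> i \<le> n \<Longrightarrow> x \<in> cells X n \<Longrightarrow> degen X n i x \<in> cells X (Suc n)"
  by (simp add: degen_def delta_ddeg sset_closed)
lemma pt_closed: "sset X \<Longrightarrow> v \<in> cells X 0 \<Longrightarrow> pt X n v \<in> cells X n"
  by (simp add: pt_def delta_const sset_closed)

lemma face_face: "sset X \<Longrightarrow> x \<in> cells X (Suc (Suc n)) \<Longrightarrow> i < j \<Longrightarrow>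
   face X n i (face X (Suc n) j x) = face X n (j - 1) (face X (Suc n) i x)"
  unfolding face_alt
  apply (subst sset_comp[where \<psi>="dface j \<circ> dface i"], simp_all add: delta_dface)
  apply (subst sset_comp[where \<psi>="dface j \<circ> dface i"], simp_all add: delta_dface)
  by (auto simp: dface_def)

lemma face_degen_lt: "sset X \<Longrightarrow> x \<in> cells X (Suc n) \<Longrightarrow> i < j \<Longrightarrow> j \<le> Suc n \<Longrightarrow>
   face X (Suc n) i (degen X (Suc n) j x) = degen X n (j - 1) (face X n i x)"
  unfolding face_alt degen_def
  apply (subst sset_comp[where \<psi>="ddeg j \<circ> dface i"], simp_all add: delta_dface delta_ddeg)
  apply (subst sset_comp[where \<psi>="ddeg j \<circ> dface i"], simp_all add: delta_dface delta_ddeg)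
  by (auto simp: dface_def ddeg_def)

lemma face_degen_eq: "sset X \<Longrightarrow> x \<in> cells X n \<Longrightarrow> j \<le> n \<Longrightarrow> (i = j \<or> i = Suc j) \<Longrightarrow>
   face X n i (degen X n j x) = x"
  unfolding face_alt degen_def
  apply (subst sset_comp[where \<psi>="id"], simp_all add: delta_dface delta_ddeg)
   apply (auto simp: dface_def ddeg_def sset_id)
  done

lemma face_degen_gt: "sset X \<Longrightarrow> x \<in> cells X (Suc n) \<Longrightarrow> Suc j < i \<Longrightarrow> j \<le> n \<Longrightarrow> i \<le> Suc (Suc n) \<Longrightarrow>
   face X (Suc n) i (degen X (Suc n) j x) = degen X n j (face X n (i - 1) x)"
  unfolding face_alt degen_def
  apply (subst sset_comp[where \<psi>="ddeg j \<circ> dface i"], simp_all add: delta_dface delta_ddeg)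
  apply (subst sset_comp[where \<psi>="ddeg j \<circ> dface i"], simp_all add: delta_dface delta_ddeg)
  by (auto simp: dface_def ddeg_def)

lemma act_pt: "sset X \<Longrightarrow> v \<in> cells X 0 \<Longrightarrow> delta_mor m n \<theta> \<Longrightarrow> act X m n \<theta> (pt X n v) = pt X m v"
  unfolding pt_def
  by (subst sset_comp[where \<psi>="\<lambda>_. 0"], simp_all add: delta_const)

lemma face_pt: "sset X \<Longrightarrow> v \<in> cells X 0 \<Longrightarrow> face X n i (pt X (Suc n) v) = pt X n v"
  by (simp add: face_alt act_pt delta_dface)
lemma degen_pt: "sset X \<Longrightarrow> v \<in> cells X 0 \<Longrightarrow> i \<le> n \<Longrightarrow> degen X n i (pt X n v) = pt X (Suc n) v"
  by (simp add: degen_def act_pt delta_ddeg)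
lemma pt0: "sset X \<Longrightarrow> v \<in> cells X 0 \<Longrightarrow> pt X 0 v = v"
  unfolding pt_def by (rule sset_id', auto)



locale sg =
  fixes G :: "'a sset" and mul :: "nat \<Rightarrow> 'a \<Rightarrow> 'a \<Rightarrow> 'a" and e :: "nat \<Rightarrow> 'a"
  assumes SG: "sgroup G mul e"
begin

abbreviation C where "C n \<equiv> cells G n"
definition iv where "iv n x = inv\<^bsub>grp G mul e n\<^esub> x"
abbreviation d where "d n i x \<equiv> face G n i x"
abbreviation s where "s n i x \<equiv> degen G n i x"

lemma SS: "sset G" using SG unfolding sgroup_def by (elim conjE)
lemma GR: "group (grp G mul e n)" using SG unfolding sgroup_def by simp

lemma mul_closed[simp]: "x \<in> C n \<Longrightarrow> y \<in> C n \<Longrightarrow> mul n x y \<in> C n"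
  using group.subgroup_self[OF GR[of n]] unfolding subgroup_def grp_def by auto
lemma e_closed[simp]: "e n \<in> C n"
  using monoid.one_closed[OF group.is_monoid[OF GR[of n]]] by (simp add: grp_def)
lemma iv_closed[simp]: "x \<in> C n \<Longrightarrow> iv n x \<in> C n"
  using group.inv_closed[OF GR[of n]] by (simp add: grp_def iv_def)
lemma assoc: "x \<in> C n \<Longrightarrow> y \<in> C n \<Longrightarrow> z \<in> C n \<Longrightarrow> mul n (mul n x y) z = mul n x (mul n y z)"
  using monoid.m_assoc[OF group.is_monoid[OF GR[of n]]] by (simp add: grp_def)
lemma lunit[simp]: "x \<in> C n \<Longrightarrow> mul n (e n) x = x"
  using monoid.l_one[OF group.is_monoid[OF GR[of n]]] by (simp add: grp_def)
lemma runit[simp]: "x \<in> C n \<Longrightarrow> mul n x (e n) = x"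
  using monoid.r_one[OF group.is_monoid[OF GR[of n]]] by (simp add: grp_def)
lemma linv[simp]: "x \<in> C n \<Longrightarrow> mul n (iv n x) x = e n"
  using group.l_inv[OF GR[of n]] by (simp add: grp_def iv_def)
lemma rinv[simp]: "x \<in> C n \<Longrightarrow> mul n x (iv n x) = e n"
  using group.r_inv[OF GR[of n]] by (simp add: grp_def iv_def)
lemma iv_iv[simp]: "x \<in> C n \<Longrightarrow> iv n (iv n x) = x"
  using group.inv_inv[OF GR[of n]] by (simp add: grp_def iv_def)
lemma iv_e[simp]: "iv n (e n) = e n"
  using monoid.inv_one[OF group.is_monoid[OF GR[of n]]] by (simp add: grp_def iv_def)
lemma iv_mul: "x \<in> C n \<Longrightarrow> y \<in> C n \<Longrightarrow> iv n (mul n x y) = mul n (iv n y) (iv n x)"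
  using group.inv_mult_group[OF GR[of n]] by (simp add: grp_def iv_def)
lemma lassoc_inv[simp]: "x \<in> C n \<Longrightarrow> y \<in> C n \<Longrightarrow> mul n (iv n x) (mul n x y) = y"
  by (simp add: assoc[symmetric])
lemma lassoc_inv2[simp]: "x \<in> C n \<Longrightarrow> y \<in> C n \<Longrightarrow> mul n x (mul n (iv n x) y) = y"
  by (simp add: assoc[symmetric])
lemma rassoc_inv[simp]: "x \<in> C n \<Longrightarrow> y \<in> C n \<Longrightarrow> mul n (mul n y x) (iv n x) = y"
  by (simp add: assoc)
lemma rassoc_inv2[simp]: "x \<in> C n \<Longrightarrow> y \<in> C n \<Longrightarrow> mul n (mul n y (iv n x)) x = y"
  by (simp add: assoc)
lemma lcancel: "x \<in> C n \<Longrightarrow> y \<in> C n \<Longrightarrow> z \<in> C n \<Longrightarrow> mul n x y = mul n x z \<longleftrightarrow> y = z"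
  by (metis lassoc_inv)
lemma rcancel: "x \<in> C n \<Longrightarrow> y \<in> C n \<Longrightarrow> z \<in> C n \<Longrightarrow> mul n y x = mul n z x \<longleftrightarrow> y = z"
  by (metis rassoc_inv)
lemma unit_unique: "x \<in> C n \<Longrightarrow> y \<in> C n \<Longrightarrow> mul n x y = x \<Longrightarrow> y = e n"
  by (metis lcancel runit e_closed)
lemma inv_unique: "x \<in> C n \<Longrightarrow> y \<in> C n \<Longrightarrow> mul n x y = e n \<Longrightarrow> y = iv n x"
proof -
  assume a: "x \<in> C n" "y \<in> C n" "mul n x y = e n"
  hence "mul n x y = mul n x (iv n x)" by simp
  thus ?thesis using lcancel[of x n y "iv n x"] a by simp
qed

lemma act_mul: "delta_mor m n \<theta> \<Longrightarrow> x \<in> C n \<Longrightarrow> y \<in> C n \<Longrightarrow>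
    act G m n \<theta> (mul n x y) = mul m (act G m n \<theta> x) (act G m n \<theta> y)"
proof -
  have "\<forall>m n \<theta> x y. delta_mor m n \<theta> \<and> x \<in> C n \<and> y \<in> C n \<longrightarrow>
        act G m n \<theta> (mul n x y) = mul m (act G m n \<theta> x) (act G m n \<theta> y)"
    using SG unfolding sgroup_def by (elim conjE)
  thus "delta_mor m n \<theta> \<Longrightarrow> x \<in> C n \<Longrightarrow> y \<in> C n \<Longrightarrow> ?thesis" by simp
qed
lemma act_closed[simp]: "delta_mor m n \<theta> \<Longrightarrow> x \<in> C n \<Longrightarrow> act G m n \<theta> x \<in> C m"
  using SS sset_closed by metis
lemma act_e[simp]: "delta_mor m n \<theta> \<Longrightarrow> act G m n \<theta> (e n) = e m"
  using act_mul[of m n \<theta> "e n" "e n"] act_closed[of m n \<theta> "e n"] by (metis unit_unique lunit e_closed)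
lemma act_iv: "delta_mor m n \<theta> \<Longrightarrow> x \<in> C n \<Longrightarrow> act G m n \<theta> (iv n x) = iv m (act G m n \<theta> x)"
  using act_mul[of m n \<theta> x "iv n x"] by (intro inv_unique) auto

lemma e_pt: "pt G n (e 0) = e n"
  by (simp add: pt_def delta_const)

lemma d_closed[simp]: "x \<in> C (Suc n) \<Longrightarrow> d n i x \<in> C n" by (simp add: SS face_closed)
lemma s_closed[simp]: "i \<le> n \<Longrightarrow> x \<in> C n \<Longrightarrow> s n i x \<in> C (Suc n)" by (simp add: SS degen_closed)
lemma d_mul[simp]: "x \<in> C (Suc n) \<Longrightarrow> y \<in> C (Suc n) \<Longrightarrow> d n i (mul (Suc n) x y) = mul n (d n i x) (d n i y)"
  by (simp add: face_alt act_mul delta_dface)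
lemma d_iv[simp]: "x \<in> C (Suc n) \<Longrightarrow> d n i (iv (Suc n) x) = iv n (d n i x)"
  by (simp add: face_alt act_iv delta_dface)
lemma d_e[simp]: "d n i (e (Suc n)) = e n"
  by (simp add: face_alt delta_dface)
lemma s_mul[simp]: "i \<le> n \<Longrightarrow> x \<in> C n \<Longrightarrow> y \<in> C n \<Longrightarrow> s n i (mul n x y) = mul (Suc n) (s n i x) (s n i y)"
  by (simp add: degen_def act_mul delta_ddeg)
lemma s_iv[simp]: "i \<le> n \<Longrightarrow> x \<in> C n \<Longrightarrow> s n i (iv n x) = iv (Suc n) (s n i x)"
  by (simp add: degen_def act_iv delta_ddeg)
lemma s_e[simp]: "i \<le> n \<Longrightarrow> s n i (e n) = e (Suc n)"
  by (simp add: degen_def delta_ddeg)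
lemma pt_closed'[simp]: "v \<in> C 0 \<Longrightarrow> pt G n v \<in> C n" by (simp add: SS pt_closed)
lemma d_pt[simp]: "v \<in> C 0 \<Longrightarrow> d n i (pt G (Suc n) v) = pt G n v" by (simp add: SS face_pt)

lemma ds_eq[simp]: "x \<in> C n \<Longrightarrow> j \<le> n \<Longrightarrow> d n j (s n j x) = x"
  by (simp add: SS face_degen_eq)
lemma ds_eq1[simp]: "x \<in> C n \<Longrightarrow> j \<le> n \<Longrightarrow> d n (Suc j) (s n j x) = x"
  by (simp add: SS face_degen_eq)

end


context sg begin

lemma ds_lt: "x \<in> C (Suc n) \<Longrightarrow> i < j \<Longrightarrow> j \<le> Suc n \<Longrightarrow> d (Suc n) i (s (Suc n) j x) = s n (j - 1) (d n i x)"
  by (simp add: SS face_degen_lt)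
lemma ds_gt: "x \<in> C (Suc n) \<Longrightarrow> Suc j < i \<Longrightarrow> j \<le> n \<Longrightarrow> i \<le> Suc (Suc n) \<Longrightarrow>
   d (Suc n) i (s (Suc n) j x) = s n j (d n (i - 1) x)"
  by (simp add: SS face_degen_gt)
lemma dd: "x \<in> C (Suc (Suc n)) \<Longrightarrow> i < j \<Longrightarrow> d n i (d (Suc n) j x) = d n (j - 1) (d (Suc n) i x)"
  by (simp add: SS face_face)

definition S :: "nat \<Rightarrow> 'a \<Rightarrow> bool" where
  "S k x \<longleftrightarrow> x \<in> C k \<and> (\<forall>j i. k = Suc j \<and> i \<le> k \<longrightarrow> d j i x = e j)"
definition H :: "nat \<Rightarrow> 'a \<Rightarrow> 'a \<Rightarrow> bool" where
  "H k x y \<longleftrightarrow> (\<exists>z\<in>C (Suc k). (\<forall>i<k. d k i z = e k) \<and> d k k z = x \<and> d k (Suc k) z = y)"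

lemma sph_e: "sph G (e 0) k x \<longleftrightarrow> S k x"
  by (simp add: sph_def S_def e_pt)
lemma htp_e: "htp G (e 0) k x y \<longleftrightarrow> H k x y"
  by (simp add: htp_def H_def e_pt)

lemma S_closed: "S k x \<Longrightarrow> x \<in> C k" by (simp add: S_def)
lemma S_face: "S (Suc j) x \<Longrightarrow> i \<le> Suc j \<Longrightarrow> d j i x = e j" by (simp add: S_def)
lemma S_e[simp]: "S k (e k)" by (simp add: S_def)
lemma S_mul: "S k x \<Longrightarrow> S k y \<Longrightarrow> S k (mul k x y)" by (auto simp: S_def)
lemma S_iv: "S k x \<Longrightarrow> S k (iv k x)" by (auto simp: S_def)

lemma H_closed: "H k x y \<Longrightarrow> x \<in> C k \<and> y \<in> C k"
  unfolding H_def by auto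

lemma ds_sph: "S k x \<Longrightarrow> i < j \<Longrightarrow> j \<le> k \<Longrightarrow> d k i (s k j x) = e k"
proof -
  assume a: "S k x" "i < j" "j \<le> k"
  then obtain p where k: "k = Suc p" by (cases k) auto
  have "d k i (s k j x) = s p (j - 1) (d p i x)" using a k ds_lt S_closed by simp
  also have "\<dots> = e k" using a k S_face by simp
  finally show ?thesis .
qed
lemma ds_sph2: "S k x \<Longrightarrow> Suc j < i \<Longrightarrow> j \<le> k \<Longrightarrow> i \<le> Suc k \<Longrightarrow> d k i (s k j x) = e k"
proof -
  assume a: "S k x" "Suc j < i" "j \<le> k" "i \<le> Suc k"
  then obtain p where k: "k = Suc p" by (cases k) auto
  have jp: "j \<le> p" using a k by simp
  have "d k i (s k j x) = s p j (d p (i - 1) x)" using a k ds_gt[of x p j i] S_closed jp by simp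
  also have "\<dots> = e k" using a k S_face jp by simp
  finally show ?thesis .
qed

lemma H_refl: "S k x \<Longrightarrow> H k x x"
  unfolding H_def
  by (rule bexI[of _ "s k k x"]) (auto simp: ds_sph S_closed)

lemma H_mul: "H k x y \<Longrightarrow> H k x' y' \<Longrightarrow> H k (mul k x x') (mul k y y')"
  unfolding H_def
proof (elim bexE conjE)
  fix z z' assume "z \<in> C (Suc k)" "z' \<in> C (Suc k)" and h: "\<forall>i<k. d k i z = e k" "d k k z = x" "d k (Suc k) z = y"
    "\<forall>i<k. d k i z' = e k" "d k k z' = x'" "d k (Suc k) z' = y'"
  thus "\<exists>z\<in>C (Suc k). (\<forall>i<k. d k i z = e k) \<and> d k k z = mul k x x' \<and> d k (Suc k) z = mul k y y'"
    by (intro bexI[of _ "mul (Suc k) z z'"]) auto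
qed

lemma H_iv: "H k x y \<Longrightarrow> H k (iv k x) (iv k y)"
  unfolding H_def
proof (elim bexE conjE)
  fix z assume "z \<in> C (Suc k)" and h: "\<forall>i<k. d k i z = e k" "d k k z = x" "d k (Suc k) z = y"
  thus "\<exists>z\<in>C (Suc k). (\<forall>i<k. d k i z = e k) \<and> d k k z = iv k x \<and> d k (Suc k) z = iv k y"
    by (intro bexI[of _ "iv (Suc k) z"]) auto
qed

lemma H_sym: "S k x \<Longrightarrow> S k y \<Longrightarrow> H k x y \<Longrightarrow> H k y x"
proof -
  assume a: "S k x" "S k y" "H k x y"
  have "H k (mul k (mul k y (iv k x)) x) (mul k (mul k y (iv k y)) x)"
    using a by (intro H_mul H_iv H_refl) auto
  thus ?thesis using a S_closed by simp
qed

lemma H_trans: "S k y \<Longrightarrow> H k x y \<Longrightarrow> H k y u \<Longrightarrow> H k x u"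
proof -
  assume a: "S k y" "H k x y" "H k y u"
  have "H k (mul k (mul k x (iv k y)) y) (mul k (mul k y (iv k y)) u)"
    using a by (intro H_mul H_iv H_refl) auto
  thus ?thesis using a S_closed H_closed by simp
qed

lemma H_e_iff: "S k x \<Longrightarrow> S k y \<Longrightarrow> H k (mul k x (iv k y)) (e k) \<Longrightarrow> H k x y"
proof -
  assume a: "S k x" "S k y" "H k (mul k x (iv k y)) (e k)"
  have "H k (mul k (mul k x (iv k y)) y) (mul k (e k) y)"
    using a by (intro H_mul H_refl) auto
  thus ?thesis using a S_closed by simp
qed

lemma face_sph: "V \<in> C (Suc k) \<Longrightarrow> j \<le> Suc k \<Longrightarrow> (\<forall>i\<le>Suc k. i \<noteq> j \<longrightarrow> d k i V = e k) \<Longrightarrow> S k (d k j V)"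
proof -
  assume a: "V \<in> C (Suc k)" "j \<le> Suc k" "\<forall>i\<le>Suc k. i \<noteq> j \<longrightarrow> d k i V = e k"
  show ?thesis unfolding S_def
  proof (intro conjI allI impI)
    show "d k j V \<in> C k" using a by simp
    fix p i assume b: "k = Suc p \<and> i \<le> k"
    show "d p i (d k j V) = e p"
    proof (cases "i < j")
      case True
      have "d p i (d k j V) = d p (j - 1) (d k i V)" using a b True dd[of V p i j] by simp
      thus ?thesis using a b True by simp
    next
      case False
      have "d p j (d k (Suc i) V) = d p i (d k j V)" using a b False dd[of V p j "Suc i"] by simp
      thus ?thesis using a b False by simp
    qed
  qed
qed

lemma SF: "V \<in> C (Suc k) \<Longrightarrow> j \<le> k \<Longrightarrow> (\<forall>i\<le>Suc k. i \<noteq> j \<longrightarrow> d k i V = e k) \<Longrightarrow> H k (d k j V) (e k)"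
proof (induction "k - j" arbitrary: j V)
  case 0
  hence "j = k" by simp
  thus ?case using 0 unfolding H_def by (intro bexI[of _ V]) auto
next
  case (Suc t)
  define b where "b = d k j V"
  have Sb: "S k b" unfolding b_def using Suc.prems by (intro face_sph) auto
  define V' where "V' = mul (Suc k) (iv (Suc k) (s k j b)) V"
  have bC: "b \<in> C k" using Sb S_closed by blast
  have V'C: "V' \<in> C (Suc k)" unfolding V'_def using Suc.prems bC by simp
  have f1: "d k (Suc j) V' = iv k b" unfolding V'_def using Suc.prems bC by simp
  have f2: "\<forall>i\<le>Suc k. i \<noteq> Suc j \<longrightarrow> d k i V' = e k"
  proof (intro allI impI)
    fix i assume i: "i \<le> Suc k" "i \<noteq> Suc j"
    have ds: "d k i (s k j b) = (if i = j then b else e k)"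
      using i Suc.prems Sb ds_sph ds_sph2 S_closed[OF Sb] by (cases "i < j"; cases "i = j") auto
    show "d k i V' = e k" unfolding V'_def using Suc.prems bC i ds
      by (auto simp: b_def)
  qed
  have "H k (d k (Suc j) V') (e k)"
    using Suc.hyps(1)[of "Suc j" V'] Suc.hyps(2) Suc.prems V'C f2 by simp
  hence "H k (iv k (iv k b)) (iv k (e k))" using f1 H_iv by metis
  thus ?case using bC b_def by simp
qed

lemma TP: "W \<in> C (Suc k) \<Longrightarrow> a \<le> k \<Longrightarrow> (\<forall>i\<le>Suc k. i \<noteq> a \<and> i \<noteq> Suc a \<longrightarrow> d k i W = e k) \<Longrightarrow>
   S k (d k a W) \<Longrightarrow> S k (d k (Suc a) W) \<Longrightarrow> H k (d k a W) (d k (Suc a) W)"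
proof -
  assume a: "W \<in> C (Suc k)" "a \<le> k" "\<forall>i\<le>Suc k. i \<noteq> a \<and> i \<noteq> Suc a \<longrightarrow> d k i W = e k"
    "S k (d k a W)" "S k (d k (Suc a) W)"
  define c where "c = d k a W"
  define c' where "c' = d k (Suc a) W"
  have cC: "c \<in> C k" "c' \<in> C k" using a S_closed c_def c'_def by auto
  define W' where "W' = mul (Suc k) W (iv (Suc k) (s k a c'))"
  have W'C: "W' \<in> C (Suc k)" unfolding W'_def using a cC by simp
  have ds: "\<And>i. i \<le> Suc k \<Longrightarrow> d k i (s k a c') = (if i = a \<or> i = Suc a then c' else e k)"
    using a c'_def ds_sph ds_sph2 by (case_tac "i < a"; case_tac "i = a"; case_tac "i = Suc a") auto
  have f: "\<forall>i\<le>Suc k. i \<noteq> a \<longrightarrow> d k i W' = e k"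
    unfolding W'_def using a cC ds by (auto simp: c'_def)
  have "d k a W' = mul k c (iv k c')" unfolding W'_def using a cC ds by (simp add: c_def)
  hence "H k (mul k c (iv k c')) (e k)" using SF[OF W'C a(2) f] by simp
  thus ?thesis using H_e_iff a c_def c'_def by simp
qed

end


context sg begin

lemma pt_mul: "a \<in> C 0 \<Longrightarrow> b \<in> C 0 \<Longrightarrow> pt G n (mul 0 a b) = mul n (pt G n a) (pt G n b)"
  by (simp add: pt_def act_mul delta_const)
lemma pt_iv: "a \<in> C 0 \<Longrightarrow> pt G n (iv 0 a) = iv n (pt G n a)"
  by (simp add: pt_def act_iv delta_const)
lemma s_pt[simp]: "v \<in> C 0 \<Longrightarrow> i \<le> n \<Longrightarrow> s n i (pt G n v) = pt G (Suc n) v"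
  by (simp add: SS degen_pt)

lemma sph_tr: "u \<in> C 0 \<Longrightarrow> sph G u k x \<longleftrightarrow> x \<in> C k \<and> S k (mul k x (pt G k (iv 0 u)))"
proof
  assume u: "u \<in> C 0"
  { assume a: "sph G u k x"
    hence xC: "x \<in> C k" by (simp add: sph_def)
    have "S k (mul k x (pt G k (iv 0 u)))" unfolding S_def
    proof (intro conjI allI impI)
      show "mul k x (pt G k (iv 0 u)) \<in> C k" using xC u by simp
      fix j i assume b: "k = Suc j \<and> i \<le> k"
      have "d j i x = pt G j u" using a b by (simp add: sph_def)
      thus "d j i (mul k x (pt G k (iv 0 u))) = e j" using b xC u
        by (simp add: pt_iv[symmetric] pt_mul[symmetric] e_pt)
    qed
    thus "x \<in> C k \<and> S k (mul k x (pt G k (iv 0 u)))" using xC by simp }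
  { assume a: "x \<in> C k \<and> S k (mul k x (pt G k (iv 0 u)))"
    show "sph G u k x" unfolding sph_def
    proof (intro conjI allI impI)
      show "x \<in> C k" using a by simp
      fix j i assume b: "k = Suc j \<and> i \<le> k"
      have "d j i (mul k x (pt G k (iv 0 u))) = e j" using a b S_face by blast
      hence "mul j (d j i x) (pt G j (iv 0 u)) = e j" using a b u by simp
      hence "d j i x = iv j (pt G j (iv 0 u))" using a b u
        by (metis d_closed iv_closed pt_closed' inv_unique iv_iv)
      thus "d j i x = pt G j u" using u by (simp add: pt_iv)
    qed }
qed

lemma htp_tr: "u \<in> C 0 \<Longrightarrow> x \<in> C k \<Longrightarrow> y \<in> C k \<Longrightarrow>
   htp G u k x y \<longleftrightarrow> H k (mul k x (pt G k (iv 0 u))) (mul k y (pt G k (iv 0 u)))"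
proof
  assume u: "u \<in> C 0" and xy: "x \<in> C k" "y \<in> C k"
  { assume "htp G u k x y"
    then obtain z where z: "z \<in> C (Suc k)" "\<forall>i<k. d k i z = pt G k u" "d k k z = x" "d k (Suc k) z = y"
      unfolding htp_def by blast
    show "H k (mul k x (pt G k (iv 0 u))) (mul k y (pt G k (iv 0 u)))" unfolding H_def
      apply (rule bexI[of _ "mul (Suc k) z (pt G (Suc k) (iv 0 u))"])
      using z u by (auto simp: pt_mul[symmetric] e_pt) }
  { assume "H k (mul k x (pt G k (iv 0 u))) (mul k y (pt G k (iv 0 u)))"
    then obtain z where z: "z \<in> C (Suc k)" "\<forall>i<k. d k i z = e k" "d k k z = mul k x (pt G k (iv 0 u))"
       "d k (Suc k) z = mul k y (pt G k (iv 0 u))"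
      unfolding H_def by blast
    have pu: "mul k (pt G k (iv 0 u)) (pt G k u) = e k" using u by (simp add: pt_mul[symmetric] e_pt)
    show "htp G u k x y" unfolding htp_def
      apply (rule bexI[of _ "mul (Suc k) z (pt G (Suc k) u)"])
    proof (intro conjI allI impI)
      show "mul (Suc k) z (pt G (Suc k) u) \<in> C (Suc k)" using z u by simp
      fix i assume "i < k" thus "d k i (mul (Suc k) z (pt G (Suc k) u)) = pt G k u" using z u by simp
    next
      show "d k k (mul (Suc k) z (pt G (Suc k) u)) = x" using z u xy by (simp add: assoc pu)
    next
      show "d k (Suc k) (mul (Suc k) z (pt G (Suc k) u)) = y" using z u xy by (simp add: assoc pu)
    qed }
qed

end


locale sgm = sg +
  fixes F :: "nat \<Rightarrow> 'a \<Rightarrow> 'a"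
  assumes FM: "smap G G F" and FP: "F 0 (e 0) = e 0"
begin

lemma F_closed[simp]: "x \<in> C n \<Longrightarrow> F n x \<in> C n"
  using FM unfolding smap_def by blast
lemma F_act: "delta_mor m n \<theta> \<Longrightarrow> x \<in> C n \<Longrightarrow> F m (act G m n \<theta> x) = act G m n \<theta> (F n x)"
  using FM unfolding smap_def by blast
lemma F_d[simp]: "x \<in> C (Suc n) \<Longrightarrow> F n (d n i x) = d n i (F (Suc n) x)"
  by (simp add: face_alt F_act delta_dface)
lemma F_s[simp]: "i \<le> n \<Longrightarrow> x \<in> C n \<Longrightarrow> F (Suc n) (s n i x) = s n i (F n x)"
  by (simp add: degen_def F_act delta_ddeg)
lemma F_pt[simp]: "v \<in> C 0 \<Longrightarrow> F n (pt G n v) = pt G n (F 0 v)"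
  by (simp add: pt_def F_act delta_const)
lemma F_e[simp]: "F n (e n) = e n"
  using F_pt[of "e 0" n] by (simp add: e_pt FP)

lemma F_S: "S k x \<Longrightarrow> S k (F k x)"
  unfolding S_def by auto (metis F_d F_e)

lemma F_H: "H k x y \<Longrightarrow> H k (F k x) (F k y)"
  unfolding H_def
proof (elim bexE conjE)
  fix z assume "z \<in> C (Suc k)" and h: "\<forall>i<k. d k i z = e k" "d k k z = x" "d k (Suc k) z = y"
  thus "\<exists>z\<in>C (Suc k). (\<forall>i<k. d k i z = e k) \<and> d k k z = F k x \<and> d k (Suc k) z = F k y"
    by (intro bexI[of _ "F (Suc k) z"]) (auto simp flip: F_d)
qed

lemma F_add: "S (Suc p) x \<Longrightarrow> S (Suc p) y \<Longrightarrow>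
   H (Suc p) (F (Suc p) (mul (Suc p) x y)) (mul (Suc p) (F (Suc p) x) (F (Suc p) y))"
proof -
  let ?k = "Suc p"
  assume Sx: "S ?k x" and Sy: "S ?k y"
  have xC: "x \<in> C ?k" and yC: "y \<in> C ?k" using Sx Sy S_closed by auto
  define w where "w = mul (Suc ?k) (s ?k p x) (s ?k ?k y)"
  have wC: "w \<in> C (Suc ?k)" unfolding w_def using xC yC by simp
  have dsx: "\<And>i. i \<le> Suc ?k \<Longrightarrow> d ?k i (s ?k p x) = (if i = p \<or> i = ?k then x else e ?k)"
    using Sx xC ds_sph ds_sph2 by (case_tac "i < p"; case_tac "i = p"; case_tac "i = ?k") auto
  have dsy: "\<And>i. i \<le> Suc ?k \<Longrightarrow> d ?k i (s ?k ?k y) = (if i = ?k \<or> i = Suc ?k then y else e ?k)"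
    using Sy yC ds_sph by (case_tac "i < ?k"; case_tac "i = ?k"; case_tac "i = Suc ?k") auto
  define W where "W = F (Suc ?k) w"
  have WC: "W \<in> C (Suc ?k)" using wC W_def by simp
  have dW: "\<And>i. i \<le> Suc ?k \<Longrightarrow> d ?k i W = F ?k (d ?k i w)" using wC W_def by simp
  define a where "a = F ?k x"
  define b where "b = F ?k y"
  define c where "c = F ?k (mul ?k x y)"
  have Sa: "S ?k a" "S ?k b" "S ?k c" using Sx Sy F_S S_mul a_def b_def c_def by auto
  have abc: "a \<in> C ?k" "b \<in> C ?k" "c \<in> C ?k" using Sa S_closed by auto
  define V where "V = mul (Suc ?k) (mul (Suc ?k) (iv (Suc ?k) (s ?k p a)) W) (iv (Suc ?k) (s ?k ?k b))"
  have VC: "V \<in> C (Suc ?k)" unfolding V_def using abc WC by simp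
  have dsa: "\<And>i. i \<le> Suc ?k \<Longrightarrow> d ?k i (s ?k p a) = (if i = p \<or> i = ?k then a else e ?k)"
    using Sa abc ds_sph ds_sph2 by (case_tac "i < p"; case_tac "i = p"; case_tac "i = ?k") auto
  have dsb: "\<And>i. i \<le> Suc ?k \<Longrightarrow> d ?k i (s ?k ?k b) = (if i = ?k \<or> i = Suc ?k then b else e ?k)"
    using Sa abc ds_sph by (case_tac "i < ?k"; case_tac "i = ?k"; case_tac "i = Suc ?k") auto
  have dWi: "\<And>i. i \<le> Suc ?k \<Longrightarrow> d ?k i W = (if i = p then a else if i = ?k then c else if i = Suc ?k then b else e ?k)"
    using dW dsx dsy xC yC unfolding w_def a_def b_def c_def by auto
  have fV: "\<forall>i\<le>Suc ?k. i \<noteq> ?k \<longrightarrow> d ?k i V = e ?k"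
    unfolding V_def using abc WC dsa dsb dWi by auto
  have "d ?k ?k V = mul ?k (mul ?k (iv ?k a) c) (iv ?k b)"
    unfolding V_def using abc WC dsa dsb dWi by auto
  hence h: "H ?k (mul ?k (mul ?k (iv ?k a) c) (iv ?k b)) (e ?k)" using SF[OF VC _ fV] by simp
  have "H ?k (mul ?k (mul ?k a (mul ?k (mul ?k (iv ?k a) c) (iv ?k b))) b) (mul ?k (mul ?k a (e ?k)) b)"
    using Sa h by (intro H_mul H_refl) auto
  thus ?thesis using abc unfolding a_def b_def c_def by (simp add: assoc)
qed

lemma F_iv: "S (Suc p) x \<Longrightarrow> H (Suc p) (F (Suc p) (iv (Suc p) x)) (iv (Suc p) (F (Suc p) x))"
proof -
  let ?k = "Suc p"
  assume Sx: "S ?k x"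
  have xC: "x \<in> C ?k" using Sx S_closed by auto
  have h: "H ?k (e ?k) (mul ?k (F ?k x) (F ?k (iv ?k x)))"
    using F_add[OF Sx S_iv[OF Sx]] xC by simp
  have S1: "S ?k (F ?k x)" "S ?k (F ?k (iv ?k x))" using Sx S_iv F_S by auto
  have "H ?k (mul ?k (iv ?k (F ?k x)) (e ?k)) (mul ?k (iv ?k (F ?k x)) (mul ?k (F ?k x) (F ?k (iv ?k x))))"
    using h S1 by (intro H_mul H_refl S_iv)
  hence "H ?k (iv ?k (F ?k x)) (F ?k (iv ?k x))" using xC by simp
  thus ?thesis using S1 S_iv H_sym by blast
qed

end


context sgm begin

lemma delta_thr: "delta_mor m (Suc 0) (\<lambda>j. if j < a then 0 else 1)"
  unfolding delta_mor_def by auto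

lemma BC:
  assumes conn: "\<forall>x\<in>C 0. htp G (e 0) 0 x (e 0)"
    and u: "u \<in> C 0" and Sx: "S k x0"
  shows "H k (mul k (F k (mul k x0 (pt G k u))) (iv k (pt G k (F 0 u)))) (F k x0)"
proof -
  obtain p where p: "p \<in> C (Suc 0)" "d 0 0 p = u" "d 0 (Suc 0) p = e 0"
    using conn u unfolding htp_def by (auto simp: e_pt)
  have x0C: "x0 \<in> C k" using Sx S_closed by blast
  define Q where "Q a = act G k (Suc 0) (\<lambda>j. if j < a then 0 else 1) p" for a
  have QC: "Q a \<in> C k" for a unfolding Q_def using p delta_thr by simp
  have Q0: "Q 0 = pt G k u"
  proof -
    have "pt G k u = act G k 0 (\<lambda>_. 0) (act G 0 (Suc 0) (dface 0) p)" using p by (simp add: pt_def face_alt)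
    also have "\<dots> = act G k (Suc 0) (\<lambda>_. 1) p"
      by (rule sset_comp[OF SS delta_const[OF order_refl] delta_dface p(1)]) (auto simp: dface_def)
    finally show ?thesis unfolding Q_def by simp
  qed
  have Qk: "Q (Suc k) = e k"
  proof -
    have "e k = pt G k (e 0)" by (simp add: e_pt)
    also have "\<dots> = act G k 0 (\<lambda>_. 0) (act G 0 (Suc 0) (dface 1) p)" using p by (simp add: pt_def face_alt)
    also have "\<dots> = act G k (Suc 0) (\<lambda>j. if j < Suc k then 0 else 1) p"
      by (rule sset_comp[OF SS delta_const[OF order_refl] delta_dface p(1)]) (auto simp: dface_def)
    finally show ?thesis unfolding Q_def by simp
  qed
  define T where "T q = mul k (F k (mul k x0 q)) (iv k (F k q))" for q
  have TS: "S k (T q)" if "q \<in> C k" for q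
    unfolding S_def T_def using that x0C Sx
    by (auto simp flip: F_d simp: S_face)
  define P where "P a = act G (Suc k) (Suc 0) (\<lambda>j. if j \<le> a then 0 else 1) p" for a
  have PC: "P a \<in> C (Suc k)" for a unfolding P_def using p delta_thr[of "Suc k" "Suc a"]
    by (simp add: less_Suc_eq_le)
  have dPa: "d k a (P a) = Q a" for a
    unfolding P_def Q_def face_alt
    apply (rule sset_comp[OF SS delta_dface _ p(1)])
    using delta_thr[of "Suc k" "Suc a"] apply (simp add: less_Suc_eq_le)
    by (auto simp: dface_def)
  have dPa1: "d k (Suc a) (P a) = Q (Suc a)" for a
    unfolding P_def Q_def face_alt
    apply (rule sset_comp[OF SS delta_dface _ p(1)])
    using delta_thr[of "Suc k" "Suc a"] apply (simp add: less_Suc_eq_le)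
    by (auto simp: dface_def)
  define W where "W a = mul (Suc k) (F (Suc k) (mul (Suc k) (s k a x0) (P a))) (iv (Suc k) (F (Suc k) (P a)))" for a
  have step: "H k (T (Q a)) (T (Q (Suc a)))" if a: "a \<le> k" for a
  proof -
    have WC: "W a \<in> C (Suc k)" unfolding W_def using a x0C PC by simp
    have dW: "d k i (W a) = mul k (F k (mul k (d k i (s k a x0)) (d k i (P a)))) (iv k (F k (d k i (P a))))"
      for i unfolding W_def using a x0C PC by (simp del: F_d add: F_d[symmetric])
    have o: "\<forall>i\<le>Suc k. i \<noteq> a \<and> i \<noteq> Suc a \<longrightarrow> d k i (W a) = e k"
    proof (intro allI impI)
      fix i assume i: "i \<le> Suc k" "i \<noteq> a \<and> i \<noteq> Suc a"
      have "d k i (s k a x0) = e k" using i a Sx ds_sph ds_sph2 by (cases "i < a") auto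
      thus "d k i (W a) = e k" using dW PC by simp
    qed
    have da: "d k a (W a) = T (Q a)" using dW[of a] a x0C dPa by (simp add: T_def)
    have da1: "d k (Suc a) (W a) = T (Q (Suc a))" using dW[of "Suc a"] a x0C dPa1 by (simp add: T_def)
    show ?thesis using TP[OF WC a o] da da1 TS QC by simp
  qed
  have chain: "a \<le> Suc k \<Longrightarrow> H k (T (Q 0)) (T (Q a))" for a
  proof (induction a)
    case 0 thus ?case using H_refl TS QC by blast
  next
    case (Suc a)
    thus ?case using step[of a] H_trans TS QC by force
  qed
  have "H k (T (Q 0)) (T (Q (Suc k)))" using chain by simp
  thus ?thesis using Q0 Qk x0C u unfolding T_def by simp
qed

end


context sg begin

lemma moore:
  assumes k: "k \<le> Suc n" and yC: "\<forall>i\<le>Suc n. i \<noteq> k \<longrightarrow> y i \<in> C n"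
    and comp: "\<forall>p i j. n = Suc p \<and> i < j \<and> j \<le> Suc n \<and> i \<noteq> k \<and> j \<noteq> k \<longrightarrow> d p i (y j) = d p (j - 1) (y i)"
  shows "\<exists>x\<in>C (Suc n). \<forall>i\<le>Suc n. i \<noteq> k \<longrightarrow> d n i x = y i"
proof -
  have ph1: "t \<le> k \<Longrightarrow> \<exists>w\<in>C (Suc n). \<forall>j<t. d n j w = y j" for t
  proof (induction t)
    case 0 show ?case by (rule bexI[of _ "e (Suc n)"]) auto
  next
    case (Suc t)
    then obtain w where w: "w \<in> C (Suc n)" "\<forall>j<t. d n j w = y j" by auto
    have tn: "t \<le> n" "t < k" using Suc.prems k by auto
    have yt: "y t \<in> C n" using yC tn by auto
    define u where "u = mul n (iv n (d n t w)) (y t)"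
    have uC: "u \<in> C n" unfolding u_def using w yt by simp
    define w' where "w' = mul (Suc n) w (s n t u)"
    have w'C: "w' \<in> C (Suc n)" unfolding w'_def using w uC tn by simp
    have "\<forall>j<Suc t. d n j w' = y j"
    proof (intro allI impI)
      fix j assume j: "j < Suc t"
      show "d n j w' = y j"
      proof (cases "j = t")
        case True thus ?thesis unfolding w'_def u_def using w yt tn by simp
      next
        case False
        hence jt: "j < t" using j by simp
        then obtain p where np: "n = Suc p" using tn by (cases n) auto
        have yj: "y j \<in> C n" using yC jt tn by auto
        have "d p j u = mul p (iv p (d p j (d n t w))) (d p j (y t))" unfolding u_def using w yt np by simp
        also have "d p j (d n t w) = d p (t - 1) (y j)" using dd[of w p j t] w np jt by simp
        also have "d p j (y t) = d p (t - 1) (y j)" using comp np jt tn by auto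
        finally have du: "d p j u = e p" using yj np by simp
        have "d n j (s n t u) = e n" using ds_lt[of u p j t] uC np jt tn du by simp
        thus ?thesis unfolding w'_def using w uC tn jt yj by simp
      qed
    qed
    thus ?case using w'C by blast
  qed
  then obtain w0 where w0: "w0 \<in> C (Suc n)" "\<forall>j<k. d n j w0 = y j" by blast
  have ph2: "r \<le> Suc n - k \<Longrightarrow> \<exists>w\<in>C (Suc n). (\<forall>j<k. d n j w = y j) \<and> (\<forall>j. Suc n - r < j \<and> j \<le> Suc n \<longrightarrow> d n j w = y j)" for r
  proof (induction r)
    case 0 thus ?case using w0 by auto
  next
    case (Suc r)
    then obtain w where w: "w \<in> C (Suc n)" "\<forall>j<k. d n j w = y j" "\<forall>j. Suc n - r < j \<and> j \<le> Suc n \<longrightarrow> d n j w = y j" by auto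
    define i where "i = Suc n - r"
    have ik: "k < i" "i \<le> Suc n" "0 < i" using Suc.prems i_def by auto
    have yi: "y i \<in> C n" using yC ik by auto
    define u where "u = mul n (iv n (d n i w)) (y i)"
    have uC: "u \<in> C n" unfolding u_def using w yi by simp
    define w' where "w' = mul (Suc n) w (s n (i - 1) u)"
    have w'C: "w' \<in> C (Suc n)" unfolding w'_def using w uC ik by simp
    have A: "\<forall>j<k. d n j w' = y j"
    proof (intro allI impI)
      fix j assume jk: "j < k"
      then obtain p where np: "n = Suc p" using ik by (cases n) auto
      have yj: "y j \<in> C n" using yC jk k by auto
      have "d p j u = mul p (iv p (d p j (d n i w))) (d p j (y i))" unfolding u_def using w yi np by simp
      also have "d p j (d n i w) = d p (i - 1) (y j)" using dd[of w p j i] w np jk ik w(2) by simp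
      also have "d p j (y i) = d p (i - 1) (y j)" using comp np jk ik by auto
      finally have du: "d p j u = e p" using yj np by simp
      have "d n j (s n (i - 1) u) = s p (i - 1 - 1) (d p j u)" using ds_lt[of u p j "i - 1"] uC np jk ik by simp
      hence "d n j (s n (i - 1) u) = e n" using du np ik by simp
      thus "d n j w' = y j" unfolding w'_def using w uC ik jk yj by simp
    qed
    have B: "\<forall>j. Suc n - Suc r < j \<and> j \<le> Suc n \<longrightarrow> d n j w' = y j"
    proof (intro allI impI)
      fix j assume j: "Suc n - Suc r < j \<and> j \<le> Suc n"
      show "d n j w' = y j"
      proof (cases "j = i")
        case True
        have "d n i (s n (i - 1) u) = u" using ds_eq1[of u n "i - 1"] uC ik by simp
        thus ?thesis unfolding w'_def u_def using True w yi ik by simp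
      next
        case False
        hence ji: "i < j" using j i_def ik by auto
        then obtain p where np: "n = Suc p" using ik j by (cases n) auto
        have yj: "y j \<in> C n" using yC ji j ik by auto
        have wj: "d n j w = y j" using w(3) ji j i_def by auto
        have "d p (j - 1) u = mul p (iv p (d p (j - 1) (d n i w))) (d p (j - 1) (y i))" unfolding u_def using w yi np by simp
        also have "d p (j - 1) (d n i w) = d p i (y j)" using dd[of w p i j] w np ji wj by simp
        also have "d p (j - 1) (y i) = d p i (y j)"
        proof -
          have "i \<noteq> k" "j \<noteq> k" using ji ik by auto
          hence "d p i (y j) = d p (j - 1) (y i)" using comp np ji j by blast
          thus ?thesis by simp
        qed
        finally have du: "d p (j - 1) u = e p" using yj np by simp
        have ip: "i - 1 \<le> p" using ji j np by linarith
        have "d n j (s n (i - 1) u) = s p (i - 1) (d p (j - 1) u)" using ds_gt[of u p "i - 1" j] uC np ji j ik ip by simp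
        hence "d n j (s n (i - 1) u) = e n" using du np ik ji j ip by simp
        thus ?thesis unfolding w'_def using w uC ik wj yj by simp
      qed
    qed
    show ?case using A B w'C by blast
  qed
  from ph2[of "Suc n - k"] obtain w where w: "w \<in> C (Suc n)" "\<forall>j<k. d n j w = y j"
    "\<forall>j. k < j \<and> j \<le> Suc n \<longrightarrow> d n j w = y j" using k by auto
  show ?thesis using w by (intro bexI[of _ w]) (auto simp: nat_neq_iff)
qed

lemma kan_G: "kan G"
  unfolding kan_def using moore by blast

end


lemma ev_common: fixes P :: "'b \<Rightarrow> nat \<Rightarrow> bool" shows "finite L \<Longrightarrow> (\<forall>l\<in>L. \<exists>m0. \<forall>m\<ge>m0. P l m) \<Longrightarrow> \<exists>m0. \<forall>m\<ge>m0. \<forall>l\<in>L. P l m"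
proof -
  assume fin: "finite L" and h: "\<forall>l\<in>L. \<exists>m0. \<forall>m\<ge>m0. P l m"
  have "\<forall>l\<in>L. eventually (P l) sequentially" using h by (simp add: eventually_sequentially)
  hence "eventually (\<lambda>m. \<forall>l\<in>L. P l m) sequentially" using fin by (simp add: eventually_ball_finite)
  thus ?thesis by (simp add: eventually_sequentially)
qed

context sgm begin

abbreviation R where "R n \<equiv> tel_rel G F n"
definition cl where "cl n i x = R n `` {(i, x)}"
abbreviation X where "X \<equiv> colim G F"

lemma Fi_closed[simp]: "x \<in> C n \<Longrightarrow> (F n ^^ t) x \<in> C n"
  by (induction t) auto
lemma Fi_act: "delta_mor m n \<theta> \<Longrightarrow> x \<in> C n \<Longrightarrow> (F m ^^ t) (act G m n \<theta> x) = act G m n \<theta> ((F n ^^ t) x)"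
  by (induction t) (auto simp: F_act)
lemma Fi_d: "x \<in> C (Suc n) \<Longrightarrow> (F n ^^ t) (d n i x) = d n i ((F (Suc n) ^^ t) x)"
  by (simp add: face_alt Fi_act delta_dface)
lemma Fi_pt: "v \<in> C 0 \<Longrightarrow> (F n ^^ t) (pt G n v) = pt G n ((F 0 ^^ t) v)"
  by (simp add: pt_def Fi_act delta_const)
lemma Fi_add: "(F n ^^ a) ((F n ^^ b) x) = (F n ^^ (a + b)) x"
  by (simp add: funpow_add)

lemma R_iff: "((i, x), (j, y)) \<in> R n \<longleftrightarrow> x \<in> C n \<and> y \<in> C n \<and>
   (\<exists>m. i \<le> m \<and> j \<le> m \<and> (F n ^^ (m - i)) x = (F n ^^ (m - j)) y)"
  unfolding tel_rel_def by simp

lemma R_mono: "i \<le> m \<Longrightarrow> j \<le> m \<Longrightarrow> (F n ^^ (m - i)) x = (F n ^^ (m - j)) y \<Longrightarrow> m \<le> m' \<Longrightarrow>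
   (F n ^^ (m' - i)) x = (F n ^^ (m' - j)) y"
proof -
  assume a: "i \<le> m" "j \<le> m" "(F n ^^ (m - i)) x = (F n ^^ (m - j)) y" "m \<le> m'"
  have "(F n ^^ (m' - i)) x = (F n ^^ (m' - m)) ((F n ^^ (m - i)) x)" using a(1,4) by (simp add: Fi_add)
  also have "\<dots> = (F n ^^ (m' - m)) ((F n ^^ (m - j)) y)" using a by simp
  also have "\<dots> = (F n ^^ (m' - j)) y" using a(2,4) by (simp add: Fi_add)
  finally show ?thesis .
qed

lemma R_equiv: "equiv (UNIV \<times> C n) (R n)"
proof (rule equivI)
  show "refl_on (UNIV \<times> C n) (R n)" unfolding refl_on_def
    by (auto simp: tel_rel_def)
  show "sym (R n)" unfolding sym_def tel_rel_def by auto
  show "trans (R n)" unfolding trans_def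
  proof (intro allI impI)
    fix a b c assume ab: "(a, b) \<in> R n" and bc: "(b, c) \<in> R n"
    obtain i x j y l z where abc: "a = (i, x)" "b = (j, y)" "c = (l, z)" by (cases a; cases b; cases c) auto
    obtain m1 where m1: "i \<le> m1" "j \<le> m1" "(F n ^^ (m1 - i)) x = (F n ^^ (m1 - j)) y"
      using ab abc R_iff by blast
    obtain m2 where m2: "j \<le> m2" "l \<le> m2" "(F n ^^ (m2 - j)) y = (F n ^^ (m2 - l)) z"
      using bc abc R_iff by blast
    let ?M = "max m1 m2"
    have "(F n ^^ (?M - i)) x = (F n ^^ (?M - j)) y" using R_mono[OF m1] by simp
    also have "\<dots> = (F n ^^ (?M - l)) z" using R_mono[OF m2] by simp
    finally have eq: "(F n ^^ (?M - i)) x = (F n ^^ (?M - l)) z" .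
    have xz: "x \<in> C n" "z \<in> C n" using ab bc abc R_iff by auto
    have "i \<le> ?M" "l \<le> ?M" using m1 m2 by auto
    thus "(a, c) \<in> R n" unfolding abc R_iff using xz eq by blast
  qed
  show "R n \<subseteq> (UNIV \<times> C n) \<times> (UNIV \<times> C n)" by (auto simp: tel_rel_def)
qed

lemma cl_eq: "x \<in> C n \<Longrightarrow> y \<in> C n \<Longrightarrow> cl n i x = cl n j y \<longleftrightarrow> ((i, x), (j, y)) \<in> R n"
  unfolding cl_def using equiv_class_eq_iff[OF R_equiv[of n], of "(i, x)" "(j, y)"] by auto

lemma cl_eqI: "x \<in> C n \<Longrightarrow> y \<in> C n \<Longrightarrow> i \<le> m \<Longrightarrow> j \<le> m \<Longrightarrow> (F n ^^ (m - i)) x = (F n ^^ (m - j)) y \<Longrightarrow>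
   cl n i x = cl n j y"
  using cl_eq R_iff by blast

lemma cl_eqD: "x \<in> C n \<Longrightarrow> y \<in> C n \<Longrightarrow> cl n i x = cl n j y \<Longrightarrow>
   \<exists>m0. \<forall>m\<ge>m0. i \<le> m \<and> j \<le> m \<and> (F n ^^ (m - i)) x = (F n ^^ (m - j)) y"
proof -
  assume a: "x \<in> C n" "y \<in> C n" "cl n i x = cl n j y"
  then obtain m where m: "i \<le> m" "j \<le> m" "(F n ^^ (m - i)) x = (F n ^^ (m - j)) y" using cl_eq R_iff by blast
  show ?thesis using R_mono[OF m] m by (intro exI[of _ m]) auto
qed

lemma cl_shift: "x \<in> C n \<Longrightarrow> i \<le> M \<Longrightarrow> cl n i x = cl n M ((F n ^^ (M - i)) x)"
  by (rule cl_eqI[where m=M]) auto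

lemma cells_X: "cells X n = {cl n i x | i x. x \<in> C n}"
  unfolding colim_def quotient_def cl_def by auto

lemma cl_in_X[simp]: "x \<in> C n \<Longrightarrow> cl n i x \<in> cells X n"
  unfolding cells_X by blast

lemma act_X: "delta_mor m n \<theta> \<Longrightarrow> x \<in> C n \<Longrightarrow> act X m n \<theta> (cl n i x) = cl m i (act G m n \<theta> x)"
proof -
  assume th: "delta_mor m n \<theta>" and x: "x \<in> C n"
  have mem: "(i, x) \<in> cl n i x" unfolding cl_def using x by (auto simp: tel_rel_def)
  have each: "cl m j (act G m n \<theta> y) = cl m i (act G m n \<theta> x)" if "(j, y) \<in> cl n i x" for j y
  proof -
    have r: "((i, x), (j, y)) \<in> R n" using that unfolding cl_def by simp
    then obtain M where M: "i \<le> M" "j \<le> M" "(F n ^^ (M - i)) x = (F n ^^ (M - j)) y" and y: "y \<in> C n"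
      using R_iff by blast
    show ?thesis
      by (rule cl_eqI[where m=M]) (use M th x y in \<open>auto simp: Fi_act\<close>)
  qed
  have "act X m n \<theta> (cl n i x) = \<Union>((\<lambda>(j, y). cl m j (act G m n \<theta> y)) ` cl n i x)"
    by (simp add: colim_def cl_def)
  also have "(\<lambda>(j, y). cl m j (act G m n \<theta> y)) ` cl n i x = {cl m i (act G m n \<theta> x)}"
  proof (intro equalityI subsetI)
    fix c assume "c \<in> (\<lambda>(j, y). cl m j (act G m n \<theta> y)) ` cl n i x"
    then obtain q where q: "q \<in> cl n i x" "c = (\<lambda>(j, y). cl m j (act G m n \<theta> y)) q" by blast
    obtain j y where "q = (j, y)" by (cases q)
    hence "(j, y) \<in> cl n i x" "c = cl m j (act G m n \<theta> y)" using q by auto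
    thus "c \<in> {cl m i (act G m n \<theta> x)}" using each by simp
  next
    fix c assume "c \<in> {cl m i (act G m n \<theta> x)}"
    hence "c = (\<lambda>(j, y). cl m j (act G m n \<theta> y)) (i, x)" by simp
    thus "c \<in> (\<lambda>(j, y). cl m j (act G m n \<theta> y)) ` cl n i x" using mem by blast
  qed
  also have "\<Union>{cl m i (act G m n \<theta> x)} = cl m i (act G m n \<theta> x)" by simp
  finally show ?thesis .
qed

lemma X_rep: "c \<in> cells X n \<Longrightarrow> \<exists>i x. x \<in> C n \<and> c = cl n i x"
  unfolding cells_X by blast

lemma sset_X: "sset X"
  unfolding sset_def
proof (intro conjI allI impI)
  fix m n \<theta> c assume a: "delta_mor m n \<theta> \<and> c \<in> cells X n"
  obtain i x where x: "x \<in> C n" "c = cl n i x" using X_rep a by blast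
  show "act X m n \<theta> c \<in> cells X m" using x a by (simp add: act_X)
next
  fix n c assume c: "c \<in> cells X n"
  obtain i x where x: "x \<in> C n" "c = cl n i x" using X_rep[OF c] by blast
  have "delta_mor n n id" by (simp add: delta_mor_def)
  thus "act X n n id c = c" using x by (simp add: act_X SS sset_id)
next
  fix l m n \<theta> \<phi> c assume a: "delta_mor l m \<theta> \<and> delta_mor m n \<phi> \<and> c \<in> cells X n"
  obtain i x where x: "x \<in> C n" "c = cl n i x" using X_rep a by blast
  show "act X l m \<theta> (act X m n \<phi> c) = act X l n (\<phi> \<circ> \<theta>) c"
    using x a act_X[OF delta_comp[of l m \<theta> n \<phi>]] by (simp add: act_X SS sset_comp0)
next
  fix m n \<theta> \<theta>' c assume a: "delta_mor m n \<theta> \<and> (\<forall>i\<le>m. \<theta> i = \<theta>' i) \<and> c \<in> cells X n"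
  obtain i x where x: "x \<in> C n" "c = cl n i x" using X_rep a by blast
  have h: "\<forall>i\<le>m. \<theta> i = \<theta>' i" "\<forall>i\<le>m. \<theta> i \<le> n" "\<forall>i j. i \<le> j \<and> j \<le> m \<longrightarrow> \<theta> i \<le> \<theta> j"
    using a unfolding delta_mor_def by auto
  have th': "delta_mor m n \<theta>'" unfolding delta_mor_def
  proof (intro conjI allI impI)
    fix i assume "i \<le> m" thus "\<theta>' i \<le> n" using h by metis
  next
    fix i j assume ij: "i \<le> j \<and> j \<le> m"
    hence "\<theta> i \<le> \<theta> j" "i \<le> m" using h by auto
    thus "\<theta>' i \<le> \<theta>' j" using h ij by metis
  qed
  have "act G m n \<theta> x = act G m n \<theta>' x"
    by (rule sset_ext[OF SS]) (use a x in auto)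
  thus "act X m n \<theta> c = act X m n \<theta>' c"
    using x a th' by (simp add: act_X)
qed

lemma face_X: "x \<in> C (Suc n) \<Longrightarrow> face X n l (cl (Suc n) i x) = cl n i (d n l x)"
  by (simp add: face_alt act_X delta_dface)
lemma pt_X: "v \<in> C 0 \<Longrightarrow> pt X n (cl 0 i v) = cl n i (pt G n v)"
  by (simp add: pt_def act_X delta_const)
lemma colim_in_cl: "colim_in G F n x = cl n 0 x"
  by (simp add: colim_in_def cl_def)

end


context sgm begin

lemma kan_X: "kan X"
  unfolding kan_def
proof (intro allI impI, elim conjE)
  fix n k y
  assume k: "k \<le> Suc n" and yX: "\<forall>i\<le>Suc n. i \<noteq> k \<longrightarrow> y i \<in> cells X n"
    and comp: "\<forall>p i j. n = Suc p \<and> i < j \<and> j \<le> Suc n \<and> i \<noteq> k \<and> j \<noteq> k \<longrightarrow>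
             face X p i (y j) = face X p (j - 1) (y i)"
  have "\<forall>i. \<exists>q. i \<le> Suc n \<and> i \<noteq> k \<longrightarrow> snd q \<in> C n \<and> y i = cl n (fst q) (snd q)"
    using yX X_rep by fastforce
  then obtain rep where rep: "\<And>i. i \<le> Suc n \<Longrightarrow> i \<noteq> k \<Longrightarrow> snd (rep i) \<in> C n \<and> y i = cl n (fst (rep i)) (snd (rep i))"
    by metis
  define I where "I i = fst (rep i)" for i
  define a where "a i = snd (rep i)" for i
  define M where "M = Max (I ` {..Suc n})"
  have IM: "I i \<le> M" if "i \<le> Suc n" for i unfolding M_def using that by simp
  define a' where "a' i = (F n ^^ (M - I i)) (a i)" for i
  have a'C: "a' i \<in> C n" if "i \<le> Suc n" "i \<noteq> k" for i
    unfolding a'_def a_def using rep that by simp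
  have ya': "y i = cl n M (a' i)" if "i \<le> Suc n" "i \<noteq> k" for i
    unfolding a'_def using rep[OF that] IM[OF that(1)] cl_shift a_def I_def by simp
  define L where "L = {(i, j). i < j \<and> j \<le> Suc n \<and> i \<noteq> k \<and> j \<noteq> k}"
  have finL: "finite L" unfolding L_def by (rule finite_subset[of _ "{..Suc n} \<times> {..Suc n}"]) auto
  define P where "P q m = (M \<le> m \<and> (\<forall>p. n = Suc p \<longrightarrow>
     (F p ^^ (m - M)) (d p (fst q) (a' (snd q))) = (F p ^^ (m - M)) (d p (snd q - 1) (a' (fst q)))))" for q m
  have evP: "\<forall>q\<in>L. \<exists>m0. \<forall>m\<ge>m0. P q m"
  proof
    fix q assume q: "q \<in> L"
    then obtain i j where ij: "q = (i, j)" "i < j" "j \<le> Suc n" "i \<noteq> k" "j \<noteq> k" unfolding L_def by blast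
    show "\<exists>m0. \<forall>m\<ge>m0. P q m"
    proof (cases n)
      case 0 thus ?thesis unfolding P_def by auto
    next
      case (Suc p)
      have "face X p i (y j) = face X p (j - 1) (y i)" using comp Suc ij by blast
      hence eq: "cl p M (d p i (a' j)) = cl p M (d p (j - 1) (a' i))"
        using ya' a'C ij Suc by (simp add: face_X)
      have iC: "a' j \<in> C (Suc p)" "a' i \<in> C (Suc p)" using a'C ij Suc by auto
      obtain m0 where "\<forall>m\<ge>m0. M \<le> m \<and> (F p ^^ (m - M)) (d p i (a' j)) = (F p ^^ (m - M)) (d p (j - 1) (a' i))"
        using cl_eqD[OF d_closed[OF iC(1)] d_closed[OF iC(2)] eq] by blast
      thus ?thesis unfolding P_def using Suc ij by auto
    qed
  qed
  obtain m0 where m0: "\<forall>m\<ge>m0. \<forall>q\<in>L. P q m" using ev_common[OF finL evP] by blast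
  define m where "m = max m0 M"
  have Pm: "\<forall>q\<in>L. P q m" using m0 m_def by simp
  define b where "b i = (F n ^^ (m - M)) (a' i)" for i
  have bC: "\<forall>i\<le>Suc n. i \<noteq> k \<longrightarrow> b i \<in> C n" unfolding b_def using a'C by simp
  have bcomp: "\<forall>p i j. n = Suc p \<and> i < j \<and> j \<le> Suc n \<and> i \<noteq> k \<and> j \<noteq> k \<longrightarrow> d p i (b j) = d p (j - 1) (b i)"
  proof (intro allI impI)
    fix p i j assume h: "n = Suc p \<and> i < j \<and> j \<le> Suc n \<and> i \<noteq> k \<and> j \<noteq> k"
    hence "(i, j) \<in> L" unfolding L_def by auto
    hence "(F p ^^ (m - M)) (d p i (a' j)) = (F p ^^ (m - M)) (d p (j - 1) (a' i))"
      using Pm h unfolding P_def by auto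
    thus "d p i (b j) = d p (j - 1) (b i)" unfolding b_def using h a'C Fi_d by simp
  qed
  obtain x where x: "x \<in> C (Suc n)" "\<forall>i\<le>Suc n. i \<noteq> k \<longrightarrow> d n i x = b i"
    using moore[OF k bC bcomp] by blast
  show "\<exists>x\<in>cells X (Suc n). \<forall>i\<le>Suc n. i \<noteq> k \<longrightarrow> face X n i x = y i"
  proof (intro bexI[of _ "cl (Suc n) m x"] allI impI)
    fix i assume i: "i \<le> Suc n" "i \<noteq> k"
    have "face X n i (cl (Suc n) m x) = cl n m (b i)" using x i by (simp add: face_X)
    also have "\<dots> = cl n M (a' i)" unfolding b_def using a'C[OF i] m_def
      by (simp add: cl_shift[of "a' i" n M m])
    finally show "face X n i (cl (Suc n) m x) = y i" using ya'[OF i] by simp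
  qed (use x in simp)
qed


lemma htp_Xin: "u \<in> C 0 \<Longrightarrow> htp G u k a b \<Longrightarrow> htp X (cl 0 M u) k (cl k M a) (cl k M b)"
proof -
  assume u: "u \<in> C 0" and h: "htp G u k a b"
  then obtain z where z: "z \<in> C (Suc k)" "\<forall>i<k. d k i z = pt G k u" "d k k z = a" "d k (Suc k) z = b"
    unfolding htp_def by blast
  show ?thesis unfolding htp_def
    by (rule bexI[of _ "cl (Suc k) M z"]) (use z u in \<open>auto simp: face_X pt_X\<close>)
qed

lemma sph_X: "v \<in> C 0 \<Longrightarrow> sph X (cl 0 0 v) k c \<Longrightarrow> \<exists>M a. a \<in> C k \<and> c = cl k M a \<and> sph G ((F 0 ^^ M) v) k a"
proof -
  assume v: "v \<in> C 0" and h: "sph X (cl 0 0 v) k c"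
  have cX: "c \<in> cells X k" using h by (simp add: sph_def)
  obtain i a0 where a0: "a0 \<in> C k" "c = cl k i a0" using X_rep[OF cX] by blast
  define P where "P l m = (i \<le> m \<and> (\<forall>j. k = Suc j \<longrightarrow> (F j ^^ (m - i)) (d j l a0) = (F j ^^ m) (pt G j v)))" for l m
  have ev: "\<forall>l\<in>{..k}. \<exists>m0. \<forall>m\<ge>m0. P l m"
  proof
    fix l assume l: "l \<in> {..k}"
    show "\<exists>m0. \<forall>m\<ge>m0. P l m"
    proof (cases k)
      case 0 thus ?thesis unfolding P_def by auto
    next
      case (Suc j)
      have "face X j l c = pt X j (cl 0 0 v)" using h Suc l by (simp add: sph_def)
      hence eq: "cl j i (d j l a0) = cl j 0 (pt G j v)" using a0 Suc v by (simp add: face_X pt_X)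
      obtain m0 where "\<forall>m\<ge>m0. i \<le> m \<and> (F j ^^ (m - i)) (d j l a0) = (F j ^^ (m - 0)) (pt G j v)"
        using cl_eqD[OF d_closed pt_closed'[OF v] eq] a0 Suc by blast
      thus ?thesis unfolding P_def using Suc by auto
    qed
  qed
  obtain m where m: "\<forall>l\<in>{..k}. P l m" using ev_common[OF _ ev] by blast
  define a where "a = (F k ^^ (m - i)) a0"
  have im: "i \<le> m" using m unfolding P_def by auto
  have "sph G ((F 0 ^^ m) v) k a" unfolding sph_def
  proof (intro conjI allI impI)
    show "a \<in> C k" unfolding a_def using a0 by simp
    fix j l assume jl: "k = Suc j \<and> l \<le> k"
    have "(F j ^^ (m - i)) (d j l a0) = (F j ^^ m) (pt G j v)" using m jl unfolding P_def by auto
    thus "d j l a = pt G j ((F 0 ^^ m) v)" unfolding a_def using jl a0 v by (simp add: Fi_d Fi_pt)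
  qed
  moreover have "c = cl k m a" unfolding a_def using a0 im cl_shift by simp
  moreover have "a \<in> C k" unfolding a_def using a0 by simp
  ultimately show ?thesis by blast
qed

lemma htp_X: "v \<in> C 0 \<Longrightarrow> x \<in> C k \<Longrightarrow> x' \<in> C k \<Longrightarrow> htp X (cl 0 0 v) k (cl k 0 x) (cl k 0 x') \<Longrightarrow>
   \<exists>m0. \<forall>m\<ge>m0. htp G ((F 0 ^^ m) v) k ((F k ^^ m) x) ((F k ^^ m) x')"
proof -
  assume v: "v \<in> C 0" and x: "x \<in> C k" "x' \<in> C k" and h: "htp X (cl 0 0 v) k (cl k 0 x) (cl k 0 x')"
  then obtain z where z: "z \<in> cells X (Suc k)" "\<forall>i<k. face X k i z = pt X k (cl 0 0 v)"
    "face X k k z = cl k 0 x" "face X k (Suc k) z = cl k 0 x'" unfolding htp_def by blast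
  obtain i z0 where z0: "z0 \<in> C (Suc k)" "z = cl (Suc k) i z0" using X_rep[OF z(1)] by blast
  define tgt where "tgt l = (if l < k then pt G k v else if l = k then x else x')" for l
  have tC: "tgt l \<in> C k" for l unfolding tgt_def using v x by simp
  have feq: "cl k i (d k l z0) = cl k 0 (tgt l)" if "l \<le> Suc k" for l
  proof -
    have "l < k \<or> l = k \<or> l = Suc k" using that by auto
    thus ?thesis using z z0 v unfolding tgt_def by (elim disjE) (auto simp: face_X pt_X)
  qed
  define P where "P l m = (i \<le> m \<and> (F k ^^ (m - i)) (d k l z0) = (F k ^^ m) (tgt l))" for l m
  have ev: "\<forall>l\<in>{..Suc k}. \<exists>m0. \<forall>m\<ge>m0. P l m"
  proof
    fix l assume "l \<in> {..Suc k}"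
    hence eq: "cl k i (d k l z0) = cl k 0 (tgt l)" using feq by simp
    obtain m0 where "\<forall>m\<ge>m0. i \<le> m \<and> (F k ^^ (m - i)) (d k l z0) = (F k ^^ (m - 0)) (tgt l)"
      using cl_eqD[OF d_closed[OF z0(1)] tC eq] by blast
    thus "\<exists>m0. \<forall>m\<ge>m0. P l m" unfolding P_def by auto
  qed
  obtain m0 where m0: "\<forall>m\<ge>m0. \<forall>l\<in>{..Suc k}. P l m" using ev_common[OF _ ev] by blast
  show ?thesis
  proof (intro exI[of _ m0] allI impI)
    fix m assume mm: "m0 \<le> m"
    have Pm: "\<And>l. l \<le> Suc k \<Longrightarrow> d k l ((F (Suc k) ^^ (m - i)) z0) = (F k ^^ m) (tgt l)"
      using m0 mm z0 unfolding P_def by (auto simp: Fi_d)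
    show "htp G ((F 0 ^^ m) v) k ((F k ^^ m) x) ((F k ^^ m) x')" unfolding htp_def
      apply (rule bexI[of _ "(F (Suc k) ^^ (m - i)) z0"])
      using Pm[of k] Pm[of "Suc k"] Pm v z0 by (auto simp: tgt_def Fi_pt)
  qed
qed

end


lemma cells_sprod[simp]: "cells (sprod A B) n = cells A n \<times> cells B n"
  by (simp add: sprod_def)
lemma act_sprod[simp]: "act (sprod A B) m n \<theta> (a, b) = (act A m n \<theta> a, act B m n \<theta> b)"
  by (simp add: sprod_def)
lemma face_sprod[simp]: "face (sprod A B) n i (a, b) = (face A n i a, face B n i b)"
  by (simp add: face_def)
lemma pt_sprod[simp]: "pt (sprod A B) n (a, b) = (pt A n a, pt B n b)"
  by (simp add: pt_def)

lemma sset_sprod: "sset A \<Longrightarrow> sset B \<Longrightarrow> sset (sprod A B)"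
  unfolding sset_def by (auto simp: sprod_def split: prod.splits)

lemma sph_sprod: "sph (sprod A B) (a, b) k (x, y) \<longleftrightarrow> sph A a k x \<and> sph B b k y"
  unfolding sph_def by auto

lemma htp_sprod: "htp (sprod A B) (a, b) k (x, y) (x', y') \<longleftrightarrow> htp A a k x x' \<and> htp B b k y y'"
proof
  assume "htp (sprod A B) (a, b) k (x, y) (x', y')"
  then obtain z where z: "z \<in> cells (sprod A B) (Suc k)" "\<forall>i<k. face (sprod A B) k i z = pt (sprod A B) k (a, b)"
    "face (sprod A B) k k z = (x, y)" "face (sprod A B) k (Suc k) z = (x', y')" unfolding htp_def by blast
  obtain z1 z2 where zz: "z = (z1, z2)" by (cases z)
  show "htp A a k x x' \<and> htp B b k y y'" using z zz unfolding htp_def by auto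
next
  assume "htp A a k x x' \<and> htp B b k y y'"
  then obtain z1 z2 where z1: "z1 \<in> cells A (Suc k)" "\<forall>i<k. face A k i z1 = pt A k a" "face A k k z1 = x" "face A k (Suc k) z1 = x'"
   and z2: "z2 \<in> cells B (Suc k)" "\<forall>i<k. face B k i z2 = pt B k b" "face B k k z2 = y" "face B k (Suc k) z2 = y'"
    unfolding htp_def by blast
  show "htp (sprod A B) (a, b) k (x, y) (x', y')" unfolding htp_def
    by (rule bexI[of _ "(z1, z2)"]) (use z1 z2 in auto)
qed

lemma kan_sprod: "kan A \<Longrightarrow> kan B \<Longrightarrow> kan (sprod A B)"
  unfolding kan_def
proof (intro allI impI, elim conjE)
  fix n k y
  assume kA: "\<forall>n k y. k \<le> Suc n \<and> (\<forall>i\<le>Suc n. i \<noteq> k \<longrightarrow> y i \<in> cells A n) \<and>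
        (\<forall>p i j. n = Suc p \<and> i < j \<and> j \<le> Suc n \<and> i \<noteq> k \<and> j \<noteq> k \<longrightarrow> face A p i (y j) = face A p (j - 1) (y i)) \<longrightarrow>
        (\<exists>x\<in>cells A (Suc n). \<forall>i\<le>Suc n. i \<noteq> k \<longrightarrow> face A n i x = y i)"
  and kB: "\<forall>n k y. k \<le> Suc n \<and> (\<forall>i\<le>Suc n. i \<noteq> k \<longrightarrow> y i \<in> cells B n) \<and>
        (\<forall>p i j. n = Suc p \<and> i < j \<and> j \<le> Suc n \<and> i \<noteq> k \<and> j \<noteq> k \<longrightarrow> face B p i (y j) = face B p (j - 1) (y i)) \<longrightarrow>
        (\<exists>x\<in>cells B (Suc n). \<forall>i\<le>Suc n. i \<noteq> k \<longrightarrow> face B n i x = y i)"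
  and k: "k \<le> Suc n" and yC: "\<forall>i\<le>Suc n. i \<noteq> k \<longrightarrow> y i \<in> cells (sprod A B) n"
  and comp: "\<forall>p i j. n = Suc p \<and> i < j \<and> j \<le> Suc n \<and> i \<noteq> k \<and> j \<noteq> k \<longrightarrow>
     face (sprod A B) p i (y j) = face (sprod A B) p (j - 1) (y i)"
  have fs: "face (sprod A B) p i c = (face A p i (fst c), face B p i (snd c))" for p i c
    by (cases c) simp
  have c1: "\<forall>p i j. n = Suc p \<and> i < j \<and> j \<le> Suc n \<and> i \<noteq> k \<and> j \<noteq> k \<longrightarrow>
     face A p i (fst (y j)) = face A p (j - 1) (fst (y i))" using comp fs by (metis fst_conv)
  have c2: "\<forall>p i j. n = Suc p \<and> i < j \<and> j \<le> Suc n \<and> i \<noteq> k \<and> j \<noteq> k \<longrightarrow>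
     face B p i (snd (y j)) = face B p (j - 1) (snd (y i))" using comp fs by (metis snd_conv)
  have y1: "\<forall>i\<le>Suc n. i \<noteq> k \<longrightarrow> fst (y i) \<in> cells A n" using yC by (auto simp: mem_Times_iff)
  have y2: "\<forall>i\<le>Suc n. i \<noteq> k \<longrightarrow> snd (y i) \<in> cells B n" using yC by (auto simp: mem_Times_iff)
  obtain x1 where x1: "x1 \<in> cells A (Suc n)" "\<forall>i\<le>Suc n. i \<noteq> k \<longrightarrow> face A n i x1 = fst (y i)"
  proof -
    have "\<exists>x\<in>cells A (Suc n). \<forall>i\<le>Suc n. i \<noteq> k \<longrightarrow> face A n i x = fst (y i)"
      by (rule kA[rule_format, of k n "\<lambda>i. fst (y i)"]) (use k y1 c1 in blast)
    thus ?thesis using that by blast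
  qed
  obtain x2 where x2: "x2 \<in> cells B (Suc n)" "\<forall>i\<le>Suc n. i \<noteq> k \<longrightarrow> face B n i x2 = snd (y i)"
  proof -
    have "\<exists>x\<in>cells B (Suc n). \<forall>i\<le>Suc n. i \<noteq> k \<longrightarrow> face B n i x = snd (y i)"
      by (rule kB[rule_format, of k n "\<lambda>i. snd (y i)"]) (use k y2 c2 in blast)
    thus ?thesis using that by blast
  qed
  show "\<exists>x\<in>cells (sprod A B) (Suc n). \<forall>i\<le>Suc n. i \<noteq> k \<longrightarrow> face (sprod A B) n i x = y i"
    by (rule bexI[of _ "(x1, x2)"]) (use x1 x2 in \<open>auto simp: prod_eq_iff\<close>)
qed



context sgm begin

lemma sgm_iter: "sgm G mul e (\<lambda>n x. (F n ^^ t) x)"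
proof (rule sgm.intro[OF sg_axioms], rule sgm_axioms.intro)
  show "smap G G (\<lambda>n x. (F n ^^ t) x)" unfolding smap_def by (auto simp: Fi_act)
  show "(F 0 ^^ t) (e 0) = e 0" by (induction t) auto
qed

lemma BCi: "\<forall>x\<in>C 0. htp G (e 0) 0 x (e 0) \<Longrightarrow> u \<in> C 0 \<Longrightarrow> S k x0 \<Longrightarrow>
  H k (mul k ((F k ^^ t) (mul k x0 (pt G k u))) (iv k (pt G k ((F 0 ^^ t) u)))) ((F k ^^ t) x0)"
proof -
  assume a: "\<forall>x\<in>C 0. htp G (e 0) 0 x (e 0)" "u \<in> C 0" "S k x0"
  interpret I: sgm G mul e "\<lambda>n x. (F n ^^ t) x" by (rule sgm_iter)
  show ?thesis using I.BC[OF a] by simp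
qed

lemma Fi_S: "S k x \<Longrightarrow> S k ((F k ^^ t) x)"
proof -
  interpret I: sgm G mul e "\<lambda>n x. (F n ^^ t) x" by (rule sgm_iter)
  show "S k x \<Longrightarrow> S k ((F k ^^ t) x)" using I.F_S by simp
qed

end

locale main = sg +
  fixes f g :: "nat \<Rightarrow> 'a \<Rightarrow> 'a"
  assumes f_map: "smap G G f" and f_pt: "f 0 (e 0) = e 0"
    and conn: "\<forall>x\<in>C 0. htp G (e 0) 0 x (e 0)"
    and f_idem: "\<forall>k x. sph G (e 0) k x \<longrightarrow> htp G (e 0) k (f k (f k x)) (f k x)"
    and g_def: "g = (\<lambda>n x. mul n x (iv n (f n x)))"

sublocale main \<subseteq> A: sgm G mul e f
  by (rule sgm.intro[OF sg_axioms], rule sgm_axioms.intro[of G f e, OF f_map f_pt])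

lemma (in main) g_map: "smap G G g"
  unfolding smap_def g_def
proof (intro conjI allI impI)
  fix n x assume "x \<in> C n" thus "mul n x (iv n (f n x)) \<in> C n" by simp
next
  fix m n \<theta> x assume a: "delta_mor m n \<theta> \<and> x \<in> C n"
  thus "mul m (act G m n \<theta> x) (iv m (f m (act G m n \<theta> x))) = act G m n \<theta> (mul n x (iv n (f n x)))"
    by (simp add: act_mul act_iv A.F_act)
qed

sublocale main \<subseteq> B: sgm G mul e g
  by (rule sgm.intro[OF sg_axioms], rule sgm_axioms.intro[of G g e, OF g_map]) (simp add: g_def f_pt)

context main begin

lemma fidem: "S k x \<Longrightarrow> H k (f k (f k x)) (f k x)"
  using f_idem by (simp add: sph_e htp_e)

lemma fpow: "S k x \<Longrightarrow> 0 < t \<Longrightarrow> H k ((f k ^^ t) x) (f k x)"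
proof (induction t)
  case 0 thus ?case by simp
next
  case (Suc t)
  show ?case
  proof (cases t)
    case 0 thus ?thesis using Suc A.F_S H_refl by simp
  next
    case (Suc t')
    hence h: "H k ((f k ^^ t) x) (f k x)" using Suc.IH Suc.prems by simp
    have "H k (f k ((f k ^^ t) x)) (f k (f k x))" using A.F_H[OF h] .
    moreover have "H k (f k (f k x)) (f k x)" using fidem Suc.prems by simp
    ultimately show ?thesis using H_trans A.F_S Suc.prems by (simp; blast)
  qed
qed

lemma gf: "S (Suc p) x \<Longrightarrow> H (Suc p) (f (Suc p) (g (Suc p) x)) (e (Suc p))"
proof -
  let ?k = "Suc p"
  assume Sx: "S ?k x"
  have xC: "x \<in> C ?k" using Sx S_closed by blast
  have Sfx: "S ?k (f ?k x)" "S ?k (f ?k (f ?k x))" using Sx A.F_S by auto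
  have h1: "H ?k (f ?k (g ?k x)) (mul ?k (f ?k x) (f ?k (iv ?k (f ?k x))))"
    unfolding g_def using A.F_add[OF Sx S_iv[OF Sfx(1)]] by simp
  have h2: "H ?k (mul ?k (f ?k x) (f ?k (iv ?k (f ?k x)))) (mul ?k (f ?k x) (iv ?k (f ?k (f ?k x))))"
    using A.F_iv[OF Sfx(1)] H_refl[OF Sfx(1)] H_mul by blast
  have h3: "H ?k (mul ?k (f ?k x) (iv ?k (f ?k (f ?k x)))) (mul ?k (f ?k x) (iv ?k (f ?k x)))"
    using fidem[OF Sx] H_refl[OF Sfx(1)] H_mul H_iv by blast
  have S2: "S ?k (mul ?k (f ?k x) (f ?k (iv ?k (f ?k x))))" using Sfx S_mul S_iv A.F_S by blast
  have S3: "S ?k (mul ?k (f ?k x) (iv ?k (f ?k (f ?k x))))" using Sfx S_mul S_iv by blast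
  have "H ?k (f ?k (g ?k x)) (mul ?k (f ?k x) (iv ?k (f ?k x)))" using h1 h2 h3 S2 S3 H_trans by blast
  thus ?thesis using Sfx S_closed by simp
qed

lemma gg: "S (Suc p) x \<Longrightarrow> H (Suc p) (g (Suc p) (g (Suc p) x)) (g (Suc p) x)"
proof -
  let ?k = "Suc p"
  assume Sx: "S ?k x"
  have Sg: "S ?k (g ?k x)" using Sx B.F_S by blast
  have "H ?k (mul ?k (g ?k x) (iv ?k (f ?k (g ?k x)))) (mul ?k (g ?k x) (iv ?k (e ?k)))"
    using H_mul[OF H_refl[OF Sg] H_iv[OF gf[OF Sx]]] .
  thus ?thesis using Sg S_closed by (simp add: g_def[symmetric]) (simp add: g_def)
qed

lemma gpow: "S (Suc p) x \<Longrightarrow> 0 < t \<Longrightarrow> H (Suc p) ((g (Suc p) ^^ t) x) (g (Suc p) x)"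
proof (induction t)
  case 0 thus ?case by simp
next
  case (Suc t)
  show ?case
  proof (cases t)
    case 0 thus ?thesis using Suc B.F_S H_refl by simp
  next
    case (Suc t')
    hence h: "H (Suc p) ((g (Suc p) ^^ t) x) (g (Suc p) x)" using Suc.IH Suc.prems by simp
    have "H (Suc p) (g (Suc p) ((g (Suc p) ^^ t) x)) (g (Suc p) (g (Suc p) x))" using B.F_H[OF h] .
    moreover have "H (Suc p) (g (Suc p) (g (Suc p) x)) (g (Suc p) x)" using gg Suc.prems by simp
    ultimately show ?thesis using H_trans B.F_S Suc.prems by (simp; blast)
  qed
qed

lemma gfe: "S (Suc p) x \<Longrightarrow> H (Suc p) (g (Suc p) (f (Suc p) x)) (e (Suc p))"
proof -
  let ?k = "Suc p"
  assume Sx: "S ?k x"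
  have Sf: "S ?k (f ?k x)" using Sx A.F_S by blast
  have "H ?k (mul ?k (f ?k x) (iv ?k (f ?k (f ?k x)))) (mul ?k (f ?k x) (iv ?k (f ?k x)))"
    using H_mul[OF H_refl[OF Sf] H_iv[OF fidem[OF Sx]]] .
  thus ?thesis using Sf S_closed by (simp add: g_def)
qed

lemma decomp: "x \<in> C k \<Longrightarrow> x = mul k (g k x) (f k x)"
  by (simp add: g_def)

lemma surj_e: "S (Suc p) \<alpha> \<Longrightarrow> S (Suc p) \<beta> \<Longrightarrow>
   H (Suc p) (f (Suc p) (mul (Suc p) (g (Suc p) \<beta>) (f (Suc p) \<alpha>))) (f (Suc p) \<alpha>) \<and>
   H (Suc p) (g (Suc p) (mul (Suc p) (g (Suc p) \<beta>) (f (Suc p) \<alpha>))) (g (Suc p) \<beta>)"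
proof -
  let ?k = "Suc p"
  assume Sa: "S ?k \<alpha>" and Sb: "S ?k \<beta>"
  have Sga: "S ?k (g ?k \<beta>)" "S ?k (f ?k \<alpha>)" using Sa Sb A.F_S B.F_S by auto
  have S2: "S ?k (f ?k (g ?k \<beta>))" "S ?k (f ?k (f ?k \<alpha>))" "S ?k (g ?k (g ?k \<beta>))" "S ?k (g ?k (f ?k \<alpha>))"
    using Sga A.F_S B.F_S by auto
  have "H ?k (f ?k (mul ?k (g ?k \<beta>) (f ?k \<alpha>))) (mul ?k (f ?k (g ?k \<beta>)) (f ?k (f ?k \<alpha>)))"
    using A.F_add[OF Sga] .
  moreover have "H ?k (mul ?k (f ?k (g ?k \<beta>)) (f ?k (f ?k \<alpha>))) (mul ?k (e ?k) (f ?k \<alpha>))"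
    using H_mul[OF gf[OF Sb] fidem[OF Sa]] .
  ultimately have 1: "H ?k (f ?k (mul ?k (g ?k \<beta>) (f ?k \<alpha>))) (f ?k \<alpha>)"
    using H_trans S2 S_mul Sga S_closed by (metis lunit)
  have "H ?k (g ?k (mul ?k (g ?k \<beta>) (f ?k \<alpha>))) (mul ?k (g ?k (g ?k \<beta>)) (g ?k (f ?k \<alpha>)))"
    using B.F_add[OF Sga] .
  moreover have "H ?k (mul ?k (g ?k (g ?k \<beta>)) (g ?k (f ?k \<alpha>))) (mul ?k (g ?k \<beta>) (e ?k))"
    using H_mul[OF gg[OF Sb] gfe[OF Sa]] .
  ultimately have 2: "H ?k (g ?k (mul ?k (g ?k \<beta>) (f ?k \<alpha>))) (g ?k \<beta>)"
    using H_trans S2 S_mul Sga S_closed by (metis runit)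
  show ?thesis using 1 2 by simp
qed

lemma inj_e: "S k x \<Longrightarrow> S k x' \<Longrightarrow> H k (f k x) (f k x') \<Longrightarrow> H k (g k x) (g k x') \<Longrightarrow> H k x x'"
proof -
  assume a: "S k x" "S k x'" "H k (f k x) (f k x')" "H k (g k x) (g k x')"
  have "H k (mul k (g k x) (f k x)) (mul k (g k x') (f k x'))" using H_mul a by blast
  thus ?thesis using a S_closed decomp by metis
qed

end


context sgm begin

lemma F_sph: "w \<in> C 0 \<Longrightarrow> sph G w k a \<Longrightarrow> sph G (F 0 w) k (F k a)"
  unfolding sph_def by (auto simp flip: F_d)

lemma Fi_sph: "w \<in> C 0 \<Longrightarrow> sph G w k a \<Longrightarrow> sph G ((F 0 ^^ t) w) k ((F k ^^ t) a)"
proof -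
  interpret I: sgm G mul e "\<lambda>n x. (F n ^^ t) x" by (rule sgm_iter)
  show "w \<in> C 0 \<Longrightarrow> sph G w k a \<Longrightarrow> sph G ((F 0 ^^ t) w) k ((F k ^^ t) a)" using I.F_sph by simp
qed

lemma Fi0_closed: "w \<in> C 0 \<Longrightarrow> (F 0 ^^ t) w \<in> C 0" by simp

end

context sg begin

lemma htp0: "htp X b 0 x y = htp X b' 0 x y" by (simp add: htp_def)

lemma path_any: assumes conn: "\<forall>x\<in>C 0. htp G (e 0) 0 x (e 0)" and a: "a \<in> C 0" "b \<in> C 0"
  shows "htp G w 0 a b"
proof -
  obtain z1 where z1: "z1 \<in> C (Suc 0)" "d 0 0 z1 = a" "d 0 (Suc 0) z1 = e 0"
    using conn a unfolding htp_def by (auto simp: e_pt)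
  obtain z2 where z2: "z2 \<in> C (Suc 0)" "d 0 0 z2 = b" "d 0 (Suc 0) z2 = e 0"
    using conn a unfolding htp_def by (auto simp: e_pt)
  show ?thesis unfolding htp_def
    by (rule bexI[of _ "mul (Suc 0) (mul (Suc 0) z1 (iv (Suc 0) z2)) (s 0 0 b)"]) (use z1 z2 a in auto)
qed

lemma tr_cancel: "u \<in> C 0 \<Longrightarrow> x \<in> C k \<Longrightarrow> mul k (mul k x (pt G k (iv 0 u))) (pt G k u) = x"
  by (simp add: pt_iv)
lemma tr_cancel2: "u \<in> C 0 \<Longrightarrow> x \<in> C k \<Longrightarrow> mul k (mul k x (pt G k u)) (pt G k (iv 0 u)) = x"
  by (simp add: pt_iv)

end



context sgm begin

lemma side_surj:
  assumes conn: "\<forall>x\<in>C 0. htp G (e 0) 0 x (e 0)"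
    and pow: "\<forall>y t. S k y \<longrightarrow> 0 < t \<longrightarrow> H k ((F k ^^ t) y) (F k y)"
    and v: "v \<in> C 0" and a: "a \<in> C k" and sa: "sph G ((F 0 ^^ M) v) k a"
    and Sx0: "S k x0"
    and h4: "H k (F k x0) (F k (mul k a (pt G k (iv 0 ((F 0 ^^ M) v)))))"
  shows "htp X (cl 0 0 v) k (cl k 0 (mul k x0 (pt G k v))) (cl k M a)"
proof -
  define vM where "vM = (F 0 ^^ M) v"
  define u' where "u' = (F 0 ^^ Suc M) v"
  have vMC: "vM \<in> C 0" "u' \<in> C 0" using v vM_def u'_def by auto
  have u'eq: "F 0 vM = u'" unfolding vM_def u'_def by simp
  define \<alpha> where "\<alpha> = mul k a (pt G k (iv 0 vM))"
  have S\<alpha>: "S k \<alpha>" using sph_tr[OF vMC(1)] sa a unfolding \<alpha>_def vM_def by blast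
  define x where "x = mul k x0 (pt G k v)"
  have x0C: "x0 \<in> C k" using Sx0 S_closed by blast
  have xC: "x \<in> C k" unfolding x_def using x0C v by simp
  have sx: "sph G v k x" using sph_tr[OF v] xC x0C v Sx0 unfolding x_def by (simp add: tr_cancel2)
  define T1 where "T1 = mul k ((F k ^^ Suc M) x) (pt G k (iv 0 u'))"
  define T2 where "T2 = mul k (F k a) (pt G k (iv 0 u'))"
  have h1: "H k T1 ((F k ^^ Suc M) x0)"
    using BCi[OF conn v Sx0, of "Suc M"] unfolding T1_def x_def u'_def by (simp add: pt_iv v)
  have h2: "H k T2 (F k \<alpha>)"
  proof -
    have "H k (mul k ((F k ^^ 1) (mul k \<alpha> (pt G k vM))) (iv k (pt G k ((F 0 ^^ 1) vM)))) ((F k ^^ 1) \<alpha>)"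
      using BCi[OF conn vMC(1) S\<alpha>, of 1] .
    moreover have "mul k \<alpha> (pt G k vM) = a" unfolding \<alpha>_def using a vMC by (simp add: tr_cancel)
    ultimately show ?thesis unfolding T2_def using u'eq vMC by (simp add: pt_iv)
  qed
  have h3: "H k ((F k ^^ Suc M) x0) (F k x0)" using pow Sx0 by blast
  have ST1: "S k T1"
  proof -
    have "sph G u' k ((F k ^^ Suc M) x)" using Fi_sph[OF v sx] unfolding u'_def .
    thus ?thesis using sph_tr[OF vMC(2)] unfolding T1_def by blast
  qed
  have ST2: "S k T2"
  proof -
    have "sph G (F 0 vM) k (F k a)" using F_sph[OF vMC(1)] sa vM_def by blast
    thus ?thesis using sph_tr[OF vMC(2)] u'eq unfolding T2_def by blast
  qed
  have SS3: "S k ((F k ^^ Suc M) x0)" "S k (F k x0)" "S k (F k \<alpha>)"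
    using Fi_S Sx0 F_S S\<alpha> by auto
  have "H k T1 (F k x0)" using H_trans[OF SS3(1) h1 h3] .
  hence "H k T1 (F k \<alpha>)" using H_trans[OF SS3(2) _ h4[folded vM_def, folded \<alpha>_def]] by blast
  hence "H k T1 T2" using H_trans[OF SS3(3)] H_sym[OF ST2 SS3(3) h2] by blast
  hence hG: "htp G u' k ((F k ^^ Suc M) x) (F k a)"
    using htp_tr[OF vMC(2)] xC a unfolding T1_def T2_def by simp
  have "htp X (cl 0 (Suc M) u') k (cl k (Suc M) ((F k ^^ Suc M) x)) (cl k (Suc M) (F k a))"
    using htp_Xin[OF vMC(2) hG] .
  moreover have "cl 0 0 v = cl 0 (Suc M) u'" using cl_shift[OF v, of 0 "Suc M"] unfolding u'_def by simp
  moreover have "cl k 0 x = cl k (Suc M) ((F k ^^ Suc M) x)" using cl_shift[OF xC, of 0 "Suc M"] by simp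
  moreover have "cl k M a = cl k (Suc M) (F k a)" using cl_shift[OF a, of M "Suc M"] by simp
  ultimately show ?thesis unfolding x_def by simp
qed

lemma side_inj:
  assumes conn: "\<forall>x\<in>C 0. htp G (e 0) 0 x (e 0)"
    and pow: "\<forall>y t. S k y \<longrightarrow> 0 < t \<longrightarrow> H k ((F k ^^ t) y) (F k y)"
    and v: "v \<in> C 0" and sx: "sph G v k x" and sx': "sph G v k x'"
    and hX: "htp X (cl 0 0 v) k (cl k 0 x) (cl k 0 x')"
  shows "H k (F k (mul k x (pt G k (iv 0 v)))) (F k (mul k x' (pt G k (iv 0 v))))"
proof -
  have xC: "x \<in> C k" "x' \<in> C k" using sx sx' by (auto simp: sph_def)
  define x0 where "x0 = mul k x (pt G k (iv 0 v))"
  define x0' where "x0' = mul k x' (pt G k (iv 0 v))"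
  have S0: "S k x0" "S k x0'" using sph_tr[OF v] sx sx' x0_def x0'_def by auto
  obtain m0 where m0: "\<forall>m\<ge>m0. htp G ((F 0 ^^ m) v) k ((F k ^^ m) x) ((F k ^^ m) x')"
    using htp_X[OF v xC hX] by blast
  define m where "m = Suc m0"
  define u where "u = (F 0 ^^ m) v"
  have uC: "u \<in> C 0" using v u_def by simp
  have "m0 \<le> m" by (simp add: m_def)
  hence hG: "htp G u k ((F k ^^ m) x) ((F k ^^ m) x')" unfolding u_def using m0 by blast
  define T where "T y = mul k ((F k ^^ m) y) (pt G k (iv 0 u))" for y
  have hT: "H k (T x) (T x')" using htp_tr[OF uC] hG xC unfolding T_def by simp
  have ST: "S k (T x)" "S k (T x')"
    using Fi_sph[OF v sx, of m] Fi_sph[OF v sx', of m] sph_tr[OF uC] unfolding T_def u_def by blast+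
  have x0eq: "mul k x0 (pt G k v) = x" "mul k x0' (pt G k v) = x'" unfolding x0_def x0'_def
    using xC v by (simp_all add: tr_cancel)
  have b1: "H k (T x) ((F k ^^ m) x0)"
    using BCi[OF conn v S0(1), of m] x0eq v unfolding T_def u_def by (simp add: pt_iv)
  have b2: "H k (T x') ((F k ^^ m) x0')"
    using BCi[OF conn v S0(2), of m] x0eq v unfolding T_def u_def by (simp add: pt_iv)
  have SF: "S k ((F k ^^ m) x0)" "S k ((F k ^^ m) x0')" "S k (F k x0)" "S k (F k x0')"
    using Fi_S F_S S0 by auto
  have p1: "H k ((F k ^^ m) x0) (F k x0)" "H k ((F k ^^ m) x0') (F k x0')"
    using pow S0 unfolding m_def by (meson zero_less_Suc)+
  have "H k ((F k ^^ m) x0) (T x')" using H_trans[OF ST(1) H_sym[OF ST(1) SF(1) b1] hT] .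
  hence "H k ((F k ^^ m) x0) ((F k ^^ m) x0')" using H_trans[OF ST(2) _ b2] by blast
  hence "H k (F k x0) ((F k ^^ m) x0')" using H_trans[OF SF(1) H_sym[OF SF(1) SF(3) p1(1)]] by blast
  hence "H k (F k x0) (F k x0')" using H_trans[OF SF(2) _ p1(2)] by blast
  thus ?thesis unfolding x0_def x0'_def .
qed

end


context main begin

lemma final: "weq G (sprod (colim G f) (colim G g)) (\<lambda>n x. (colim_in G f n x, colim_in G g n x))"
proof -
  let ?Y = "sprod (colim G f) (colim G g)"
  let ?P = "\<lambda>n x. (colim_in G f n x, colim_in G g n x)"
  have P_eq: "?P n x = (A.cl n 0 x, B.cl n 0 x)" for n x by (simp add: A.colim_in_cl B.colim_in_cl)
  have sY: "sset ?Y" using sset_sprod A.sset_X B.sset_X by blast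
  have kY: "kan ?Y" using kan_sprod A.kan_X B.kan_X by blast
  have sm: "smap G ?Y ?P" unfolding smap_def P_eq
    by (auto simp: A.act_X B.act_X)
  have pi0s: "\<forall>y\<in>cells ?Y 0. \<exists>x\<in>C 0. htp ?Y y 0 (?P 0 x) y"
  proof
    fix y assume y: "y \<in> cells ?Y 0"
    obtain c1 c2 where c: "y = (c1, c2)" by (cases y)
    have c1: "c1 \<in> cells A.X 0" and c2: "c2 \<in> cells B.X 0" using y c by auto
    obtain i a where a: "a \<in> C 0" "c1 = A.cl 0 i a" using A.X_rep[OF c1] by blast
    obtain j b where b: "b \<in> C 0" "c2 = B.cl 0 j b" using B.X_rep[OF c2] by blast
    have fe: "(f 0 ^^ t) (e 0) = e 0" "(g 0 ^^ t) (e 0) = e 0" for t by (induction t) auto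
    have e1: "A.cl 0 0 (e 0) = A.cl 0 i (e 0)" using A.cl_shift[of "e 0" 0 0 i] fe by simp
    have e2: "B.cl 0 0 (e 0) = B.cl 0 j (e 0)" using B.cl_shift[of "e 0" 0 0 j] fe by simp
    have "htp A.X (A.cl 0 i (e 0)) 0 (A.cl 0 i (e 0)) (A.cl 0 i a)"
      using A.htp_Xin[OF e_closed path_any[OF conn e_closed a(1)]] .
    hence h1: "htp A.X c1 0 (A.cl 0 0 (e 0)) c1" using e1 a htp0 by metis
    have "htp B.X (B.cl 0 j (e 0)) 0 (B.cl 0 j (e 0)) (B.cl 0 j b)"
      using B.htp_Xin[OF e_closed path_any[OF conn e_closed b(1)]] .
    hence h2: "htp B.X c2 0 (B.cl 0 0 (e 0)) c2" using e2 b htp0 by metis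
    show "\<exists>x\<in>C 0. htp ?Y y 0 (?P 0 x) y"
      by (rule bexI[of _ "e 0"]) (use h1 h2 c in \<open>simp_all add: P_eq htp_sprod\<close>)
  qed
  have pi0i: "\<forall>x\<in>C 0. \<forall>x'\<in>C 0. htp ?Y (?P 0 x) 0 (?P 0 x) (?P 0 x') \<longrightarrow> htp G x 0 x x'"
    using path_any[OF conn] by blast
  have pik: "\<forall>v\<in>C 0. \<forall>k>0.
        (\<forall>y. sph ?Y (?P 0 v) k y \<longrightarrow> (\<exists>x. sph G v k x \<and> htp ?Y (?P 0 v) k (?P k x) y)) \<and>
        (\<forall>x x'. sph G v k x \<and> sph G v k x' \<and> htp ?Y (?P 0 v) k (?P k x) (?P k x')
                 \<longrightarrow> htp G v k x x')"
  proof (intro ballI allI impI)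
    fix v :: 'a and k :: nat assume v: "v \<in> C 0" and k: "0 < k"
    then obtain p where kp: "k = Suc p" by (cases k) auto
    have fpw: "\<forall>y t. S k y \<longrightarrow> 0 < t \<longrightarrow> H k ((f k ^^ t) y) (f k y)" using fpow by blast
    have gpw: "\<forall>y t. S k y \<longrightarrow> 0 < t \<longrightarrow> H k ((g k ^^ t) y) (g k y)" using gpow kp by blast
    have part1: "\<forall>y. sph ?Y (?P 0 v) k y \<longrightarrow> (\<exists>x. sph G v k x \<and> htp ?Y (?P 0 v) k (?P k x) y)"
    proof (intro allI impI)
      fix y assume sy: "sph ?Y (?P 0 v) k y"
      obtain c1 c2 where c: "y = (c1, c2)" by (cases y)
      have s1: "sph A.X (A.cl 0 0 v) k c1" and s2: "sph B.X (B.cl 0 0 v) k c2"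
        using sy c by (simp_all add: P_eq sph_sprod)
      obtain M a where a: "a \<in> C k" "c1 = A.cl k M a" "sph G ((f 0 ^^ M) v) k a" using A.sph_X[OF v s1] by blast
      obtain N b where b: "b \<in> C k" "c2 = B.cl k N b" "sph G ((g 0 ^^ N) v) k b" using B.sph_X[OF v s2] by blast
      define \<alpha> where "\<alpha> = mul k a (pt G k (iv 0 ((f 0 ^^ M) v)))"
      define \<beta> where "\<beta> = mul k b (pt G k (iv 0 ((g 0 ^^ N) v)))"
      have S\<alpha>: "S k \<alpha>" using sph_tr[of "(f 0 ^^ M) v"] a v unfolding \<alpha>_def by simp
      have S\<beta>: "S k \<beta>" using sph_tr[of "(g 0 ^^ N) v"] b v unfolding \<beta>_def by simp
      define x0 where "x0 = mul k (g k \<beta>) (f k \<alpha>)"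
      have Sx0: "S k x0" unfolding x0_def using S\<alpha> S\<beta> A.F_S B.F_S S_mul by blast
      have hs: "H k (f k x0) (f k \<alpha>) \<and> H k (g k x0) (g k \<beta>)" using surj_e[of p \<alpha> \<beta>] S\<alpha> S\<beta> kp x0_def by simp
      define x where "x = mul k x0 (pt G k v)"
      have x0C: "x0 \<in> C k" using Sx0 S_closed by blast
      have sx: "sph G v k x" using sph_tr[OF v] x0C v Sx0 unfolding x_def by (simp add: tr_cancel2)
      have hA: "htp A.X (A.cl 0 0 v) k (A.cl k 0 x) c1"
        using A.side_surj[OF conn fpw v a(1) a(3) Sx0] hs a(2) unfolding x_def \<alpha>_def by simp
      have hB: "htp B.X (B.cl 0 0 v) k (B.cl k 0 x) c2"
        using B.side_surj[OF conn gpw v b(1) b(3) Sx0] hs b(2) unfolding x_def \<beta>_def by simp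
      show "\<exists>x. sph G v k x \<and> htp ?Y (?P 0 v) k (?P k x) y"
        using sx hA hB c by (intro exI[of _ x]) (simp add: P_eq htp_sprod)
    qed
    have part2: "\<forall>x x'. sph G v k x \<and> sph G v k x' \<and> htp ?Y (?P 0 v) k (?P k x) (?P k x') \<longrightarrow> htp G v k x x'"
    proof (intro allI impI)
      fix x x' assume h: "sph G v k x \<and> sph G v k x' \<and> htp ?Y (?P 0 v) k (?P k x) (?P k x')"
      have xC: "x \<in> C k" "x' \<in> C k" using h by (auto simp: sph_def)
      have hA: "htp A.X (A.cl 0 0 v) k (A.cl k 0 x) (A.cl k 0 x')"
       and hB: "htp B.X (B.cl 0 0 v) k (B.cl k 0 x) (B.cl k 0 x')" using h by (simp_all add: P_eq htp_sprod)
      define x0 where "x0 = mul k x (pt G k (iv 0 v))"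
      define x0' where "x0' = mul k x' (pt G k (iv 0 v))"
      have S0: "S k x0" "S k x0'" using sph_tr[OF v] h x0_def x0'_def by auto
      have "H k (f k x0) (f k x0')" using A.side_inj[OF conn fpw v _ _ hA] h x0_def x0'_def by blast
      moreover have "H k (g k x0) (g k x0')" using B.side_inj[OF conn gpw v _ _ hB] h x0_def x0'_def by blast
      ultimately have "H k x0 x0'" using inj_e S0 by blast
      thus "htp G v k x x'" using htp_tr[OF v xC] x0_def x0'_def by simp
    qed
    show "(\<forall>y. sph ?Y (?P 0 v) k y \<longrightarrow> (\<exists>x. sph G v k x \<and> htp ?Y (?P 0 v) k (?P k x) y)) \<and>
        (\<forall>x x'. sph G v k x \<and> sph G v k x' \<and> htp ?Y (?P 0 v) k (?P k x) (?P k x')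
                 \<longrightarrow> htp G v k x x')" using part1 part2 by blast
  qed
  show ?thesis unfolding weq_def using SS sY kan_G kY sm pi0s pi0i pik by blast
qed

end



theorem lemma4p4:
  fixes G :: "'a sset" and mul :: "nat \<Rightarrow> 'a \<Rightarrow> 'a \<Rightarrow> 'a" and e :: "nat \<Rightarrow> 'a"
    and f :: "nat \<Rightarrow> 'a \<Rightarrow> 'a"
  assumes grp: "sgroup G mul e"
    and connected: "\<forall>x\<in>cells G 0. htp G (e 0) 0 x (e 0)"
    and f_map: "smap G G f"
    and f_pointed: "f 0 (e 0) = e 0"
    and f_idem: "\<forall>k x. sph G (e 0) k x \<longrightarrow> htp G (e 0) k (f k (f k x)) (f k x)"
  defines "g \<equiv> (\<lambda>n x. mul n x (inv\<^bsub>grp G mul e n\<^esub> (f n x)))"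
  shows "weq G (sprod (colim G f) (colim G g))
           (\<lambda>n x. (colim_in G f n x, colim_in G g n x))"
proof -
  interpret sg G mul e by (rule sg.intro[OF grp])
  have gd: "g = (\<lambda>n x. mul n x (iv n (f n x)))" unfolding g_def iv_def by simp
  interpret main G mul e f g
    apply (rule main.intro[OF sg_axioms])
    apply (rule main_axioms.intro)
        apply (rule f_map)
       apply (rule f_pointed)
      apply (rule connected)
     apply (rule f_idem)
    by (rule gd)
  show ?thesis by (rule final)
qed

end
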